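(* Let $k\in\hat I$ and $r\in\mathbb Z_{>0}$. Let $\mathcal R$ be the set of triples $(\lambda,\nu,\mu)$ with $(\lambda,\mu)\in\mathcal P_k^{s_k}$ and $\nu=(\nu_1,\dots,\nu_r)$ a sequence of integers with $\nu_1\ge\dots\ge\nu_r\ge0$, where $\nu_j=\nu_{j+1}$ is allowed only if $s_{k-\nu_j}=s_k$, and $\nu_r\ge\mu_1$, where $\nu_r=\mu_1$ is allowed only if $s_{k-\mu_1}=s_k$. For such a triple put $\mathrm{wt}(\lambda,\nu,\mu)=\mathrm{wt}_k(\lambda,\mu)\prod_{j=1}^r\prod_{t=1}^{\nu_j}z_{k-t}$. Then $$\sum_{(\lambda,\nu,\mu)\in\mathcal R}\mathrm{wt}(\lambda,\nu,\mu)=\sum_{\substack{a,b\in\mathbb Z_{\ge0}^N\\|a|=|b|-r}}p^{-b_k}\prod_{j=k}^{N+k-1}z_{k,j}^{a_j}\,z_{j,N+k-1}^{b_j}\,\frac{p^{a_j(a_j-1)(1-s_ks_{j+1})/4+b_j(b_j-1)(1-s_ks_j)/4}}{(p)_{a_j}(p)_{b_j}},$$ i.e. this is the character of the Fock module $\mathcal F_{s_k(r\Lambda_{k-1}-(r+1)\Lambda_k)}$ of $\mathcal E_{\mathbf s}$.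
   Context: Fix $m\ne n$, $N=m+n\ge3$ and a parity sequence $\mathbf s=(s_1,\dots,s_N)\in\{1,-1\}^N$ with exactly $m$ entries $1$, extended by $s_{i+N}=s_i$; $\hat I=\{0,\dots,N-1\}$. Formal variables $z_0,\dots,z_{N-1}$ with $z_{i+N}=z_i$, $p=z_0\cdots z_{N-1}$, $z_{i,j}=\prod_{t=i}^jz_t$ ($i\le j$), $(p)_s=\prod_{i=1}^s(1-p^i)$; $|a|=\sum_ia_i$, $a_{i+N}=a_i$, same for $b$. For $k\in\mathbb Z$, $\epsilon\in\{1,-1\}$, $\mathcal P_k^\epsilon$ is the set of pairs $(\lambda,\mu)$ of weakly decreasing sequences of non-negative integers $\lambda=(\lambda_1,\lambda_2,\dots)$, $\mu=(\mu_1,\mu_2,\dots)$, finitely many nonzero, such that: $\mu_j=0$ whenever $\lambda_j=0$; $\lambda_j=\lambda_{j+1}$ only if $s_{k+\lambda_j}=\epsilon$ or $\lambda_j=\mu_j=0$; $\mu_j=\mu_{j+1}$ only if $s_{k-\mu_j}=\epsilon$ or $\mu_j=\lambda_{j+1}=0$. $\mathrm{wt}_k(\lambda,\mu)=\prod_{j\ge1}\prod_{t=0}^{\lambda_j-1}z_{k+t}\cdot\prod_{j\ge1}\prod_{t=1}^{\mu_j}z_{k-t}$. The set $\mathcal R$ indexes a basis of the Fock module $\mathcal F_{s_k(r\Lambda_{k-1}-(r+1)\Lambda_k)}$ and $\mathrm{wt}$ is its grading normalised so that the highest weight vector has degree $1$. *)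

theory Defs
  imports "HOL-Analysis.Analysis" "HOL-Computational_Algebra.Formal_Power_Series"
begin

text \<open>Monomials in the variables z_0,...,z_{N-1} are represented by exponent vectors
  e :: nat => int (entries at positions >= N are 0; negative entries allowed for Laurent
  monomials).  A pair of partitions lambda = (lambda_1, lambda_2, ...) is encoded as a
  function lam :: nat => nat with lam i = lambda_{i+1}.  The parity sequence is
  s :: int => int, periodic of period N.\<close>

definition Pk :: "nat \<Rightarrow> (int \<Rightarrow> int) \<Rightarrow> int \<Rightarrow> int \<Rightarrow> ((nat \<Rightarrow> nat) \<times> (nat \<Rightarrow> nat)) set" where
  "Pk N s k \<epsilon> = {(lam, mu).
      (\<forall>j. lam (Suc j) \<le> lam j) \<and> (\<forall>j. mu (Suc j) \<le> mu j) \<and>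
      finite {j. lam j \<noteq> 0} \<and> finite {j. mu j \<noteq> 0} \<and>
      (\<forall>j. lam j = 0 \<longrightarrow> mu j = 0) \<and>
      (\<forall>j. lam j = lam (Suc j) \<longrightarrow> s (k + int (lam j)) = \<epsilon> \<or> (lam j = 0 \<and> mu j = 0)) \<and>
      (\<forall>j. mu j = mu (Suc j) \<longrightarrow> s (k - int (mu j)) = \<epsilon> \<or> (mu j = 0 \<and> lam (Suc j) = 0))}"

text \<open>Exponent vector of prod_{t=0}^{l-1} z_{k+t} and of prod_{t=1}^{l} z_{k-t}.\<close>
definition upexp :: "nat \<Rightarrow> int \<Rightarrow> nat \<Rightarrow> nat \<Rightarrow> int" where
  "upexp N k l i = int (card {t. t < l \<and> (k + int t) mod int N = int i})"

definition downexp :: "nat \<Rightarrow> int \<Rightarrow> nat \<Rightarrow> nat \<Rightarrow> int" where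
  "downexp N k l i = int (card {t. 1 \<le> t \<and> t \<le> l \<and> (k - int t) mod int N = int i})"

definition wtk :: "nat \<Rightarrow> int \<Rightarrow> (nat \<Rightarrow> nat) \<Rightarrow> (nat \<Rightarrow> nat) \<Rightarrow> nat \<Rightarrow> int" where
  "wtk N k lam mu i = (\<Sum>j\<in>{j. lam j \<noteq> 0}. upexp N k (lam j) i)
                      + (\<Sum>j\<in>{j. mu j \<noteq> 0}. downexp N k (mu j) i)"

definition Rset :: "nat \<Rightarrow> (int \<Rightarrow> int) \<Rightarrow> nat \<Rightarrow> nat \<Rightarrow>
    ((nat \<Rightarrow> nat) \<times> nat list \<times> (nat \<Rightarrow> nat)) set" where
  "Rset N s k r = {(lam, nu, mu).
      (lam, mu) \<in> Pk N s (int k) (s (int k)) \<and> length nu = r \<and>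
      (\<forall>j. Suc j < r \<longrightarrow> nu ! Suc j \<le> nu ! j) \<and>
      (\<forall>j. Suc j < r \<longrightarrow> nu ! Suc j = nu ! j \<longrightarrow> s (int k - int (nu ! j)) = s (int k)) \<and>
      nu ! (r - 1) \<ge> mu 0 \<and>
      (nu ! (r - 1) = mu 0 \<longrightarrow> s (int k - int (mu 0)) = s (int k))}"

definition wtR :: "nat \<Rightarrow> nat \<Rightarrow> (nat \<Rightarrow> nat) \<times> nat list \<times> (nat \<Rightarrow> nat) \<Rightarrow> nat \<Rightarrow> int" where
  "wtR N k x i = (case x of (lam, nu, mu) \<Rightarrow>
      wtk N (int k) lam mu i + (\<Sum>j<length nu. downexp N (int k) (nu ! j) i))"

text \<open>Exponent vector of z_{i,j} = prod_{t=i}^{j} z_t (indices mod N).\<close>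
definition zr :: "nat \<Rightarrow> nat \<Rightarrow> nat \<Rightarrow> nat \<Rightarrow> int" where
  "zr N i j t = int (card {u. i \<le> u \<and> u \<le> j \<and> u mod N = t})"

text \<open>(p)_a as a power series in one variable, and 1/((p)_a (p)_b).\<close>
definition qpoch :: "nat \<Rightarrow> real fps" where
  "qpoch a = (\<Prod>i\<in>{1..a}. 1 - fps_X ^ i)"

text \<open>Laurent monomial part of the (a,b)-summand on the right hand side, including
  the factor p^{-b_k} and the p-power p^{sum_j (a_j(a_j-1)(1-s_k s_{j+1})/4 + b_j(b_j-1)(1-s_k s_j)/4)}
  (each power of p = z_0...z_{N-1} contributes 1 to every exponent).\<close>
definition rhs_mon :: "nat \<Rightarrow> (int \<Rightarrow> int) \<Rightarrow> nat \<Rightarrow> (nat \<Rightarrow> nat) \<Rightarrow> (nat \<Rightarrow> nat) \<Rightarrow> nat \<Rightarrow> int" where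
  "rhs_mon N s k a b i =
     (if i < N then
        - int (b k)
        + (\<Sum>j\<in>{k..N+k-1}.
             (int (a (j mod N)) * (int (a (j mod N)) - 1) * (1 - s (int k) * s (int j + 1))) div 4
           + (int (b (j mod N)) * (int (b (j mod N)) - 1) * (1 - s (int k) * s (int j))) div 4)
        + (\<Sum>j\<in>{k..N+k-1}.
             int (a (j mod N)) * zr N k j i + int (b (j mod N)) * zr N j (N+k-1) i)
      else 0)"

text \<open>Coefficient of the monomial with exponent vector e in the formal series
  z^{m} * F(p), where p = z_0 ... z_{N-1} and F is a power series in one variable.\<close>
definition coeff_mon_p :: "nat \<Rightarrow> (nat \<Rightarrow> int) \<Rightarrow> real fps \<Rightarrow> (nat \<Rightarrow> int) \<Rightarrow> real" where
  "coeff_mon_p N m F e =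
     (if (\<exists>n::nat. \<forall>i<N. e i = m i + int n)
      then fps_nth F (THE n. \<forall>i<N. e i = m i + int n) else 0)"

definition rhs_coeff :: "nat \<Rightarrow> (int \<Rightarrow> int) \<Rightarrow> nat \<Rightarrow> (nat \<Rightarrow> nat) \<Rightarrow> (nat \<Rightarrow> nat) \<Rightarrow> (nat \<Rightarrow> int) \<Rightarrow> real" where
  "rhs_coeff N s k a b e = coeff_mon_p N (rhs_mon N s k a b) (inverse (\<Prod>j<N. qpoch (a j) * qpoch (b j))) e"

end

theory Submission
  imports Defs "HOL-Library.Multiset"
begin


definition gf :: "'a set \<Rightarrow> ('a \<Rightarrow> nat) \<Rightarrow> real fps" where
  "gf A w = Abs_fps (\<lambda>n. real (card {x\<in>A. w x = n}))"

definition finfib :: "'a set \<Rightarrow> ('a \<Rightarrow> nat) \<Rightarrow> bool" where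
  "finfib A w = (\<forall>n. finite {x\<in>A. w x = n})"

lemma gf_nth: "fps_nth (gf A w) n = real (card {x\<in>A. w x = n})"
  by (simp add: gf_def)

lemma gf_bij:
  assumes "bij_betw f A B" "\<And>x. x \<in> A \<Longrightarrow> v (f x) = w x"
  shows "gf A w = gf B v" "finfib A w \<Longrightarrow> finfib B v"
proof -
  have b: "bij_betw f {x\<in>A. w x = n} {y\<in>B. v y = n}" for n
  proof -
    have "inj_on f {x\<in>A. w x = n}" using assms(1) unfolding bij_betw_def
      by (auto intro: inj_on_subset)
    moreover have "f ` {x\<in>A. w x = n} = {y\<in>B. v y = n}"
      using assms unfolding bij_betw_def by force
    ultimately show ?thesis unfolding bij_betw_def by simp
  qed
  show "gf A w = gf B v"
    by (rule fps_ext) (simp add: gf_nth bij_betw_same_card[OF b])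
  show "finfib A w \<Longrightarrow> finfib B v"
    unfolding finfib_def using b bij_betw_finite by blast
qed

lemma gf_times:
  assumes "finfib A w" "finfib B v"
  shows "gf (A \<times> B) (\<lambda>(x,y). w x + v y) = gf A w * gf B v"
    "finfib (A \<times> B) (\<lambda>(x,y). w x + v y)"
proof -
  have eq: "{p\<in>A \<times> B. (\<lambda>(x,y). w x + v y) p = n} =
      (\<Union>i\<in>{0..n}. {x\<in>A. w x = i} \<times> {y\<in>B. v y = n - i})" for n
    by auto
  have fin: "finite ({x\<in>A. w x = i} \<times> {y\<in>B. v y = j})" for i j
    using assms unfolding finfib_def by auto
  show "finfib (A \<times> B) (\<lambda>(x,y). w x + v y)"
    unfolding finfib_def eq using fin by auto
  show "gf (A \<times> B) (\<lambda>(x,y). w x + v y) = gf A w * gf B v"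
  proof (rule fps_ext)
    fix n
    have "card {p\<in>A \<times> B. (\<lambda>(x,y). w x + v y) p = n} =
        (\<Sum>i\<in>{0..n}. card ({x\<in>A. w x = i} \<times> {y\<in>B. v y = n - i}))"
      unfolding eq by (rule card_UN_disjoint) (use fin in auto)
    then show "fps_nth (gf (A \<times> B) (\<lambda>(x,y). w x + v y)) n = fps_nth (gf A w * gf B v) n"
      by (simp add: gf_nth fps_mult_nth card_cartesian_product)
  qed
qed

lemma gf_PiE:
  assumes "finite I" "\<And>i. i \<in> I \<Longrightarrow> finfib (B i) (w i)"
  shows "gf (PiE I B) (\<lambda>W. \<Sum>i\<in>I. w i (W i)) = (\<Prod>i\<in>I. gf (B i) (w i)) \<and>
         finfib (PiE I B) (\<lambda>W. \<Sum>i\<in>I. w i (W i))"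
  using assms
proof (induction I rule: finite_induct)
  case empty
  have "gf {\<lambda>x. undefined} (\<lambda>W. 0::nat) = 1"
    by (rule fps_ext) (simp add: gf_nth)
  moreover have "finfib {\<lambda>x. undefined} (\<lambda>W. 0::nat)"
    by (simp add: finfib_def)
  ultimately show ?case by simp
next
  case (insert i I)
  let ?f = "\<lambda>(y, g). g(i := y)"
  have IH: "gf (PiE I B) (\<lambda>W. \<Sum>i\<in>I. w i (W i)) = (\<Prod>i\<in>I. gf (B i) (w i))"
    "finfib (PiE I B) (\<lambda>W. \<Sum>i\<in>I. w i (W i))"
    using insert by auto
  have bij: "bij_betw ?f (B i \<times> PiE I B) (PiE (insert i I) B)"
    unfolding bij_betw_def using inj_combinator[OF insert(2)] PiE_insert_eq by metis
  have wt: "(\<lambda>W. \<Sum>j\<in>insert i I. w j (W j)) (?f p) =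
      (\<lambda>(x,y). w i x + (\<lambda>W. \<Sum>j\<in>I. w j (W j)) y) p" if "p \<in> B i \<times> PiE I B" for p
  proof -
    obtain y g where p: "p = (y, g)" by (cases p)
    have "(\<Sum>j\<in>I. w j ((g(i := y)) j)) = (\<Sum>j\<in>I. w j (g j))"
      using insert(2) by (intro sum.cong) auto
    then show ?thesis using p insert(1,2) by simp
  qed
  have T: "gf (B i \<times> PiE I B) (\<lambda>(x,y). w i x + (\<lambda>W. \<Sum>j\<in>I. w j (W j)) y) =
      gf (B i) (w i) * gf (PiE I B) (\<lambda>W. \<Sum>j\<in>I. w j (W j))"
    "finfib (B i \<times> PiE I B) (\<lambda>(x,y). w i x + (\<lambda>W. \<Sum>j\<in>I. w j (W j)) y)"
    using gf_times[OF insert.prems[of i] IH(2)] by auto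
  have G: "gf (B i \<times> PiE I B) (\<lambda>(x,y). w i x + (\<lambda>W. \<Sum>j\<in>I. w j (W j)) y) =
      gf (PiE (insert i I) B) (\<lambda>W. \<Sum>j\<in>insert i I. w j (W j))"
    "finfib (PiE (insert i I) B) (\<lambda>W. \<Sum>j\<in>insert i I. w j (W j))"
    by (rule gf_bij[OF bij], rule wt, assumption, rule gf_bij[OF bij], rule wt, assumption, rule T(2))
  show ?case
    using G T IH(1) insert(1,2) by simp
qed


lemma mem_le_sum_mset: "x \<in># (X::nat multiset) \<Longrightarrow> x \<le> sum_mset X"
  by (metis le_add1 multi_member_split sum_mset.add_mset)

lemma sum_mset_Suc: "sum_mset (image_mset Suc Y) = sum_mset Y + size Y"
  by (induction Y) auto

lemma image_Suc_pred: "0 \<notin># X \<Longrightarrow> image_mset Suc (image_mset (\<lambda>x. x - Suc 0) X) = X"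
  by (induction X) auto

lemma pred_image_Suc: "image_mset (\<lambda>x. x - Suc 0) (image_mset Suc Y) = Y"
  by (simp add: multiset.map_comp o_def)

definition Mf :: "bool \<Rightarrow> nat \<Rightarrow> nat multiset set" where
  "Mf d c = {X. size X = c \<and> (d \<longrightarrow> (\<forall>t. count X t \<le> 1))}"

lemma finfib_Mf: "finfib (Mf d c) sum_mset"
  unfolding finfib_def
proof
  fix n
  have "{x \<in> Mf d c. sum_mset x = n} \<subseteq> multisets_of_size {..n} c"
    unfolding Mf_def multisets_of_size_def using mem_le_sum_mset by fastforce
  then show "finite {x \<in> Mf d c. sum_mset x = n}"
    by (rule finite_subset) auto
qed

lemma count_image_inj: "inj f \<Longrightarrow> count (image_mset f M) (f x) = count M x"
  by (induction M) (auto dest: injD)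

lemma count_Suc_image: "count (image_mset Suc Y) (Suc t) = count Y t"
  by (rule count_image_inj) (simp add: inj_def)

lemma count_Suc_image0: "count (image_mset Suc Y) 0 = 0"
  by (simp add: count_eq_zero_iff)

lemma Mf_image_Suc: "image_mset Suc Y \<in> Mf d c \<longleftrightarrow> Y \<in> Mf d c"
proof -
  have "(\<forall>t. count (image_mset Suc Y) t \<le> 1) \<longleftrightarrow> (\<forall>t. count Y t \<le> 1)"
    by (metis count_Suc_image count_Suc_image0 not0_implies_Suc zero_le)
  then show ?thesis unfolding Mf_def by auto
qed

lemma card_split0:
  assumes "c > 0"
  shows "card {X \<in> Mf d c. sum_mset X = n} =
     card {X \<in> Mf d c. sum_mset X = n \<and> 0 \<in># X} + card {X \<in> Mf d c. sum_mset X = n \<and> 0 \<notin># X}"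
proof -
  have "{X \<in> Mf d c. sum_mset X = n} =
     {X \<in> Mf d c. sum_mset X = n \<and> 0 \<in># X} \<union> {X \<in> Mf d c. sum_mset X = n \<and> 0 \<notin># X}" by auto
  moreover have "finite {X \<in> Mf d c. sum_mset X = n}" using finfib_Mf unfolding finfib_def by auto
  ultimately show ?thesis
    by (subst card_Un_disjoint[symmetric]) (auto intro: finite_subset)
qed

lemma sum_pred_c: "0 \<notin># X \<Longrightarrow> size X = c \<Longrightarrow> sum_mset X = sum_mset (image_mset (\<lambda>x. x - Suc 0) X) + c"
proof -
  assume a: "0 \<notin># X" "size X = c"
  have "sum_mset X = sum_mset (image_mset Suc (image_mset (\<lambda>x. x - Suc 0) X))"
    using image_Suc_pred[OF a(1)] by simp
  also have "\<dots> = sum_mset (image_mset (\<lambda>x. x - Suc 0) X) + c"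
    using a(2) by (simp only: sum_mset_Suc size_image_mset)
  finally show ?thesis .
qed

lemma card_no0:
  "card {X \<in> Mf d c. sum_mset X = n \<and> 0 \<notin># X} =
     (if c \<le> n then card {Y \<in> Mf d c. sum_mset Y = n - c} else 0)"
proof -
  have b: "bij_betw (image_mset Suc) {Y \<in> Mf d c. sum_mset Y = n - c}
             {X \<in> Mf d c. sum_mset X = n \<and> 0 \<notin># X}" if "c \<le> n"
  proof (rule bij_betw_byWitness[where f'="image_mset (\<lambda>x. x - Suc 0)"])
    show "\<forall>a\<in>{Y \<in> Mf d c. sum_mset Y = n - c}. image_mset (\<lambda>x. x - Suc 0) (image_mset Suc a) = a"
      by (simp add: pred_image_Suc)
    show "\<forall>a'\<in>{X \<in> Mf d c. sum_mset X = n \<and> 0 \<notin># X}. image_mset Suc (image_mset (\<lambda>x. x - Suc 0) a') = a'"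
      by (simp add: image_Suc_pred)
    show "image_mset Suc ` {Y \<in> Mf d c. sum_mset Y = n - c} \<subseteq> {X \<in> Mf d c. sum_mset X = n \<and> 0 \<notin># X}"
    proof safe
      fix Y assume Y: "Y \<in> Mf d c" "sum_mset Y = n - c"
      show "image_mset Suc Y \<in> Mf d c" using Y Mf_image_Suc by blast
      have "size Y = c" using Y by (simp add: Mf_def)
      then show "sum_mset (image_mset Suc Y) = n" using Y that sum_mset_Suc[of Y] by simp
      show "0 \<in># image_mset Suc Y \<Longrightarrow> False" by auto
    qed
    show "image_mset (\<lambda>x. x - Suc 0) ` {X \<in> Mf d c. sum_mset X = n \<and> 0 \<notin># X} \<subseteq> {Y \<in> Mf d c. sum_mset Y = n - c}"
    proof safe
      fix X assume X: "X \<in> Mf d c" "0 \<notin># X"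
      then have "image_mset Suc (image_mset (\<lambda>x. x - Suc 0) X) \<in> Mf d c" using image_Suc_pred by simp
      then show "image_mset (\<lambda>x. x - Suc 0) X \<in> Mf d c" by (simp add: Mf_image_Suc)
      have "sum_mset X = sum_mset (image_mset (\<lambda>x. x - Suc 0) X) + c"
        by (rule sum_pred_c) (use X in \<open>auto simp: Mf_def\<close>)
      then show "sum_mset (image_mset (\<lambda>x. x - Suc 0) X) = sum_mset X - c" by simp
    qed
  qed
  have e: "{X \<in> Mf d c. sum_mset X = n \<and> 0 \<notin># X} = {}" if "\<not> c \<le> n"
  proof -
    have ge: "sum_mset X \<ge> c" if "X \<in> Mf d c" "0 \<notin># X" for X
      using sum_pred_c[of X c] that by (auto simp: Mf_def)
    show ?thesis using that by (auto dest: ge)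
  qed
  show ?thesis
  proof (cases "c \<le> n")
    case True
    then show ?thesis using b[OF True] bij_betw_same_card by (metis (no_types, lifting))
  next
    case False
    then show ?thesis by (subst e[OF False]) simp
  qed
qed

lemma sum_minus0: "0 \<in># X \<Longrightarrow> sum_mset (X - {#0#}) = sum_mset (X::nat multiset)"
proof -
  assume "0 \<in># X"
  then have "sum_mset X = sum_mset (add_mset 0 (X - {#0#}))" by (simp only: insert_DiffM)
  then show ?thesis by simp
qed

lemma no0_minus: "count X (0::nat) \<le> 1 \<Longrightarrow> 0 \<notin># X - {#0#}"
  by (simp add: not_in_iff)

lemma card_with0_bos:
  assumes "c > 0"
  shows "card {X \<in> Mf False c. sum_mset X = n \<and> 0 \<in># X} = card {Y \<in> Mf False (c - 1). sum_mset Y = n}"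
proof -
  have "bij_betw (add_mset 0) {Y \<in> Mf False (c - 1). sum_mset Y = n} {X \<in> Mf False c. sum_mset X = n \<and> 0 \<in># X}"
  proof (rule bij_betw_byWitness[where f'="\<lambda>X. X - {#0#}"])
    show "\<forall>a\<in>{Y \<in> Mf False (c - 1). sum_mset Y = n}. add_mset 0 a - {#0#} = a" by simp
    show "\<forall>a'\<in>{X \<in> Mf False c. sum_mset X = n \<and> 0 \<in># X}. add_mset 0 (a' - {#0#}) = a'"
      by (simp add: insert_DiffM)
    show "add_mset 0 ` {Y \<in> Mf False (c - 1). sum_mset Y = n} \<subseteq> {X \<in> Mf False c. sum_mset X = n \<and> 0 \<in># X}"
    proof (rule image_subsetI)
      fix Y assume "Y \<in> {Y \<in> Mf False (c - 1). sum_mset Y = n}"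
      then show "add_mset 0 Y \<in> {X \<in> Mf False c. sum_mset X = n \<and> 0 \<in># X}"
        using assms by (simp add: Mf_def)
    qed
    show "(\<lambda>X. X - {#0#}) ` {X \<in> Mf False c. sum_mset X = n \<and> 0 \<in># X} \<subseteq> {Y \<in> Mf False (c - 1). sum_mset Y = n}"
    proof (rule image_subsetI)
      fix X assume "X \<in> {X \<in> Mf False c. sum_mset X = n \<and> 0 \<in># X}"
      then have X: "X \<in> Mf False c" "sum_mset X = n" "0 \<in># X" by auto
      then have "X - {#0#} \<in> Mf False (c - 1)" by (simp add: Mf_def size_Diff_singleton)
      moreover have "sum_mset (X - {#0#}) = n" using X by (simp add: sum_minus0)
      ultimately show "X - {#0#} \<in> {Y \<in> Mf False (c - 1). sum_mset Y = n}" by simp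
    qed
  qed
  then show ?thesis by (rule bij_betw_same_card[symmetric])
qed

lemma Mf_minus0:
  assumes "X \<in> Mf True c" "0 \<in># X"
  shows "0 \<notin># X - {#0#}" "X - {#0#} \<in> Mf True (c - 1)"
    "sum_mset X = sum_mset (image_mset (\<lambda>x. x - Suc 0) (X - {#0#})) + (c - 1)"
proof -
  have "count X 0 \<le> 1" using assms by (auto simp: Mf_def)
  then show n0: "0 \<notin># X - {#0#}" by (rule no0_minus)
  have sz: "size (X - {#0#}) = c - 1" using assms by (simp add: Mf_def size_Diff_singleton)
  have "\<forall>t. count (X - {#0#}) t \<le> 1"
  proof
    fix t
    have "count (X - {#0#}) t \<le> count X t" by simp
    also have "\<dots> \<le> 1" using assms(1) by (simp add: Mf_def)
    finally show "count (X - {#0#}) t \<le> 1" .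
  qed
  then show "X - {#0#} \<in> Mf True (c - 1)" using sz by (simp add: Mf_def)
  have "sum_mset X = sum_mset (X - {#0#})" using assms(2) by (simp add: sum_minus0)
  also have "\<dots> = sum_mset (image_mset (\<lambda>x. x - Suc 0) (X - {#0#})) + (c - 1)"
    by (rule sum_pred_c[OF n0 sz])
  finally show "sum_mset X = sum_mset (image_mset (\<lambda>x. x - Suc 0) (X - {#0#})) + (c - 1)" .
qed

lemma card_with0_fer:
  assumes "c > 0"
  shows "card {X \<in> Mf True c. sum_mset X = n \<and> 0 \<in># X} =
     (if c - 1 \<le> n then card {Y \<in> Mf True (c - 1). sum_mset Y = n - (c - 1)} else 0)"
proof -
  have b: "bij_betw (\<lambda>Y. add_mset 0 (image_mset Suc Y)) {Y \<in> Mf True (c - 1). sum_mset Y = n - (c - 1)}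
      {X \<in> Mf True c. sum_mset X = n \<and> 0 \<in># X}" if "c - 1 \<le> n"
  proof (rule bij_betw_byWitness[where f'="\<lambda>X. image_mset (\<lambda>x. x - Suc 0) (X - {#0#})"])
    show "\<forall>a\<in>{Y \<in> Mf True (c - 1). sum_mset Y = n - (c - 1)}.
       image_mset (\<lambda>x. x - Suc 0) (add_mset 0 (image_mset Suc a) - {#0#}) = a"
      by (simp add: pred_image_Suc)
    show "\<forall>a'\<in>{X \<in> Mf True c. sum_mset X = n \<and> 0 \<in># X}.
       add_mset 0 (image_mset Suc (image_mset (\<lambda>x. x - Suc 0) (a' - {#0#}))) = a'"
    proof
      fix X assume "X \<in> {X \<in> Mf True c. sum_mset X = n \<and> 0 \<in># X}"
      then have X: "X \<in> Mf True c" "0 \<in># X" by auto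
      show "add_mset 0 (image_mset Suc (image_mset (\<lambda>x. x - Suc 0) (X - {#0#}))) = X"
        using image_Suc_pred[OF Mf_minus0(1)[OF X]] X(2) by (simp add: insert_DiffM)
    qed
    show "(\<lambda>Y. add_mset 0 (image_mset Suc Y)) ` {Y \<in> Mf True (c - 1). sum_mset Y = n - (c - 1)}
       \<subseteq> {X \<in> Mf True c. sum_mset X = n \<and> 0 \<in># X}"
    proof (rule image_subsetI)
      fix Y assume "Y \<in> {Y \<in> Mf True (c - 1). sum_mset Y = n - (c - 1)}"
      then have Y: "Y \<in> Mf True (c - 1)" "sum_mset Y = n - (c - 1)" by auto
      have "image_mset Suc Y \<in> Mf True (c - 1)" using Y(1) by (simp add: Mf_image_Suc)
      then have "add_mset 0 (image_mset Suc Y) \<in> Mf True c"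
        using assms count_Suc_image0[of Y] unfolding Mf_def by auto
      moreover have "sum_mset (add_mset 0 (image_mset Suc Y)) = n"
        using Y that sum_mset_Suc[of Y] by (simp add: Mf_def)
      ultimately show "add_mset 0 (image_mset Suc Y) \<in> {X \<in> Mf True c. sum_mset X = n \<and> 0 \<in># X}"
        by simp
    qed
    show "(\<lambda>X. image_mset (\<lambda>x. x - Suc 0) (X - {#0#})) ` {X \<in> Mf True c. sum_mset X = n \<and> 0 \<in># X}
       \<subseteq> {Y \<in> Mf True (c - 1). sum_mset Y = n - (c - 1)}"
    proof (rule image_subsetI)
      fix X assume "X \<in> {X \<in> Mf True c. sum_mset X = n \<and> 0 \<in># X}"
      then have X: "X \<in> Mf True c" "0 \<in># X" "sum_mset X = n" by auto
      have "image_mset Suc (image_mset (\<lambda>x. x - Suc 0) (X - {#0#})) \<in> Mf True (c - 1)"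
        using image_Suc_pred[OF Mf_minus0(1)[OF X(1,2)]] Mf_minus0(2)[OF X(1,2)] by simp
      then have "image_mset (\<lambda>x. x - Suc 0) (X - {#0#}) \<in> Mf True (c - 1)" by (simp add: Mf_image_Suc)
      moreover have "sum_mset (image_mset (\<lambda>x. x - Suc 0) (X - {#0#})) = n - (c - 1)"
        using Mf_minus0(3)[OF X(1,2)] X(3) by simp
      ultimately show "image_mset (\<lambda>x. x - Suc 0) (X - {#0#}) \<in> {Y \<in> Mf True (c - 1). sum_mset Y = n - (c - 1)}"
        by simp
    qed
  qed
  have e: "{X \<in> Mf True c. sum_mset X = n \<and> 0 \<in># X} = {}" if "\<not> c - 1 \<le> n"
  proof -
    have ge: "sum_mset X \<ge> c - 1" if X: "X \<in> Mf True c" "0 \<in># X" for X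
      using Mf_minus0(3)[OF X] by simp
    show ?thesis using that by (auto dest: ge)
  qed
  show ?thesis
  proof (cases "c - 1 \<le> n")
    case True
    then show ?thesis using b[OF True] by (simp add: bij_betw_same_card)
  next
    case False
    then show ?thesis by (subst e[OF False]) simp
  qed
qed

lemma gf_Mf_rec_bos:
  assumes "c > 0"
  shows "gf (Mf False c) sum_mset = gf (Mf False (c - 1)) sum_mset + fps_X ^ c * gf (Mf False c) sum_mset"
proof (rule fps_ext)
  fix n
  show "fps_nth (gf (Mf False c) sum_mset) n =
    fps_nth (gf (Mf False (c - 1)) sum_mset + fps_X ^ c * gf (Mf False c) sum_mset) n"
    unfolding fps_add_nth fps_X_power_mult_nth gf_nth
    using card_split0[OF assms, of False n] card_with0_bos[OF assms, of n] card_no0[of False c n]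
    by auto
qed

lemma gf_Mf_rec_fer:
  assumes "c > 0"
  shows "gf (Mf True c) sum_mset = fps_X ^ (c - 1) * gf (Mf True (c - 1)) sum_mset + fps_X ^ c * gf (Mf True c) sum_mset"
proof (rule fps_ext)
  fix n
  show "fps_nth (gf (Mf True c) sum_mset) n =
    fps_nth (fps_X ^ (c - 1) * gf (Mf True (c - 1)) sum_mset + fps_X ^ c * gf (Mf True c) sum_mset) n"
    unfolding fps_add_nth fps_X_power_mult_nth gf_nth
    using card_split0[OF assms, of True n] card_with0_fer[OF assms, of n] card_no0[of True c n]
    by auto
qed

lemma qpoch_Suc: "qpoch (Suc c) = qpoch c * (1 - fps_X ^ Suc c)"
  unfolding qpoch_def by (simp add: prod.cl_ivl_Suc)

lemma qpoch_nth0: "fps_nth (qpoch c) 0 = 1"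
proof (induction c)
  case 0 then show ?case by (simp add: qpoch_def)
next
  case (Suc c) then show ?case by (simp add: qpoch_Suc fps_mult_nth)
qed

lemma gf_Mf0: "gf (Mf d 0) sum_mset = 1"
proof (rule fps_ext)
  fix n
  have "{X \<in> Mf d 0. sum_mset X = n} = (if n = 0 then {{#}} else {})"
    by (auto simp: Mf_def)
  then show "fps_nth (gf (Mf d 0) sum_mset) n = fps_nth 1 n" by (simp add: gf_nth)
qed

lemma solve_inv:
  fixes a b g :: "real fps"
  assumes "a * b = g" "b * inverse b = 1"
  shows "a = g * inverse b"
proof -
  have "a = a * (b * inverse b)" using assms(2) by simp
  also have "\<dots> = g * inverse b" using assms(1) by (simp add: mult.assoc[symmetric])
  finally show ?thesis .
qed

lemma gf_Mf_bos: "gf (Mf False c) sum_mset = inverse (qpoch c)"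
proof (induction c)
  case 0 then show ?case by (simp add: gf_Mf0 qpoch_def)
next
  case (Suc c)
  let ?F = "gf (Mf False (Suc c)) sum_mset"
  have "?F * (1 - fps_X ^ Suc c) = gf (Mf False c) sum_mset"
    using gf_Mf_rec_bos[of "Suc c"] by (simp add: algebra_simps)
  then have "?F * (1 - fps_X ^ Suc c) = inverse (qpoch c)" using Suc by simp
  moreover have "(1 - fps_X ^ Suc c) * inverse (1 - fps_X ^ Suc c) = (1 :: real fps)"
    by (rule inverse_mult_eq_1') simp
  ultimately have "?F = inverse (qpoch c) * inverse (1 - fps_X ^ Suc c)"
    by (rule solve_inv)
  also have "\<dots> = inverse (qpoch (Suc c))"
    by (simp add: qpoch_Suc fps_inverse_mult)
  finally show ?case .
qed

lemma gf_Mf_fer: "gf (Mf True c) sum_mset = fps_X ^ (c * (c - 1) div 2) * inverse (qpoch c)"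
proof (induction c)
  case 0 then show ?case by (simp add: gf_Mf0 qpoch_def)
next
  case (Suc c)
  let ?F = "gf (Mf True (Suc c)) sum_mset"
  have "?F * (1 - fps_X ^ Suc c) = fps_X ^ c * gf (Mf True c) sum_mset"
    using gf_Mf_rec_fer[of "Suc c"] by (simp add: algebra_simps)
  then have "?F * (1 - fps_X ^ Suc c) = fps_X ^ c * (fps_X ^ (c * (c - 1) div 2) * inverse (qpoch c))"
    using Suc by simp
  moreover have "(1 - fps_X ^ Suc c) * inverse (1 - fps_X ^ Suc c) = (1 :: real fps)"
    by (rule inverse_mult_eq_1') simp
  ultimately have "?F = fps_X ^ c * (fps_X ^ (c * (c - 1) div 2) * inverse (qpoch c)) * inverse (1 - fps_X ^ Suc c)"
    by (rule solve_inv)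
  also have "\<dots> = fps_X ^ (c + c * (c - 1) div 2) * (inverse (qpoch c) * inverse (1 - fps_X ^ Suc c))"
    by (simp add: power_add mult.assoc)
  also have "c + c * (c - 1) div 2 = Suc c * (Suc c - 1) div 2"
    by (cases c) auto
  also have "inverse (qpoch c) * inverse (1 - fps_X ^ Suc c) = inverse (qpoch (Suc c))"
    by (simp add: qpoch_Suc fps_inverse_mult)
  finally show ?case .
qed


lemma filter_mset_sum: "filter_mset P (\<Sum>j\<in>J. F j) = (\<Sum>j\<in>J. filter_mset P (F j))"
  by (induct J rule: infinite_finite_induct) simp_all

lemma image_mset_sum: "image_mset g (\<Sum>j\<in>J. F j) = (\<Sum>j\<in>J. image_mset g (F j))"
  by (induct J rule: infinite_finite_induct) simp_all

lemma sum_mset_sum: "sum_mset (\<Sum>j\<in>J. F j) = (\<Sum>j\<in>J. sum_mset (F j :: 'b::comm_monoid_add multiset))"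
  by (induct J rule: infinite_finite_induct) simp_all

lemma set_mset_sum: "finite J \<Longrightarrow> set_mset (\<Sum>j\<in>J. F j) = (\<Union>j\<in>J. set_mset (F j))"
  by (induct J rule: finite_induct) simp_all

lemma sum_filter_partition:
  assumes "\<And>v. v \<in># L \<Longrightarrow> cl v < (N::nat)"
  shows "(\<Sum>i<N. filter_mset (\<lambda>v. cl v = i) L) = L"
proof (rule multiset_eqI)
  fix x
  have "count (\<Sum>i<N. filter_mset (\<lambda>v. cl v = i) L) x = (\<Sum>i<N. if cl x = i then count L x else 0)"
    by (simp add: count_sum)
  also have "\<dots> = (if cl x < N then count L x else 0)"
    by (simp add: sum.delta[of "{..<N}" "cl x" "\<lambda>_. count L x", simplified] eq_commute)
  also have "\<dots> = count L x"
    by (metis assms not_in_iff)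
  finally show "count (\<Sum>i<N. filter_mset (\<lambda>v. cl v = i) L) x = count L x" .
qed

locale clsys =
  fixes N :: nat and D :: "nat set" and cl tt rho :: "nat \<Rightarrow> nat"
  assumes H1: "\<And>v. v \<in> D \<Longrightarrow> cl v < N \<and> rho (cl v) + N * tt v = v"
    and H2: "\<And>i t. i < N \<Longrightarrow> rho i + N * t \<in> D \<and> cl (rho i + N * t) = i \<and> tt (rho i + N * t) = t"
begin

definition splt :: "nat multiset \<Rightarrow> nat \<Rightarrow> nat multiset" where
  "splt L = (\<lambda>i\<in>{..<N}. image_mset tt (filter_mset (\<lambda>v. cl v = i) L))"

definition jn :: "(nat \<Rightarrow> nat multiset) \<Rightarrow> nat multiset" where
  "jn W = (\<Sum>i<N. image_mset (\<lambda>t. rho i + N * t) (W i))"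

lemma jn_splt: "set_mset L \<subseteq> D \<Longrightarrow> jn (splt L) = L"
proof -
  assume L: "set_mset L \<subseteq> D"
  have "jn (splt L) = (\<Sum>i<N. image_mset (\<lambda>v. rho i + N * tt v) (filter_mset (\<lambda>v. cl v = i) L))"
    unfolding jn_def splt_def by (simp add: multiset.map_comp o_def)
  also have "\<dots> = (\<Sum>i<N. filter_mset (\<lambda>v. cl v = i) L)"
  proof (rule sum.cong[OF refl])
    fix i assume "i \<in> {..<N}"
    have "image_mset (\<lambda>v. rho i + N * tt v) (filter_mset (\<lambda>v. cl v = i) L) =
        image_mset id (filter_mset (\<lambda>v. cl v = i) L)"
      by (rule image_mset_cong) (use L H1 in auto)
    then show "image_mset (\<lambda>v. rho i + N * tt v) (filter_mset (\<lambda>v. cl v = i) L) = filter_mset (\<lambda>v. cl v = i) L"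
      by simp
  qed
  also have "\<dots> = L"
    by (rule sum_filter_partition) (use L H1 in auto)
  finally show ?thesis .
qed

lemma filter_jn: "i < N \<Longrightarrow> filter_mset (\<lambda>v. cl v = i) (jn W) = image_mset (\<lambda>t. rho i + N * t) (W i)"
proof -
  assume i: "i < N"
  have "filter_mset (\<lambda>v. cl v = i) (jn W) =
      (\<Sum>j<N. image_mset (\<lambda>t. rho j + N * t) (filter_mset (\<lambda>t. cl (rho j + N * t) = i) (W j)))"
    unfolding jn_def by (simp add: filter_mset_sum filter_mset_image_mset)
  also have "\<dots> = (\<Sum>j<N. if j = i then image_mset (\<lambda>t. rho j + N * t) (W j) else {#})"
  proof (rule sum.cong[OF refl])
    fix j assume j: "j \<in> {..<N}"
    have "filter_mset (\<lambda>t. cl (rho j + N * t) = i) (W j) = filter_mset (\<lambda>t. j = i) (W j)"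
      using H2 j by (intro filter_mset_cong) auto
    then show "image_mset (\<lambda>t. rho j + N * t) (filter_mset (\<lambda>t. cl (rho j + N * t) = i) (W j)) =
        (if j = i then image_mset (\<lambda>t. rho j + N * t) (W j) else {#})"
      by simp
  qed
  also have "\<dots> = image_mset (\<lambda>t. rho i + N * t) (W i)"
    using i by (simp add: sum.delta')
  finally show ?thesis .
qed

lemma splt_jn: "W \<in> PiE {..<N} (\<lambda>_. UNIV) \<Longrightarrow> splt (jn W) = W"
proof (rule ext)
  fix i assume W: "W \<in> PiE {..<N} (\<lambda>_. UNIV)"
  show "splt (jn W) i = W i"
  proof (cases "i < N")
    case True
    have "splt (jn W) i = image_mset tt (image_mset (\<lambda>t. rho i + N * t) (W i))"
      using True by (simp add: splt_def filter_jn)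
    also have "\<dots> = image_mset id (W i)"
      by (simp add: multiset.map_comp o_def H2[OF True])
    finally show ?thesis by simp
  next
    case False
    then show ?thesis using W by (simp add: splt_def PiE_def extensional_def)
  qed
qed

lemma set_jn: "set_mset (jn W) \<subseteq> D"
  unfolding jn_def set_mset_sum[OF finite_lessThan] using H2 by auto

lemma bij_splt: "bij_betw splt {L. set_mset L \<subseteq> D} (PiE {..<N} (\<lambda>_. UNIV))"
proof (rule bij_betw_byWitness[where f'=jn])
  show "\<forall>a\<in>{L. set_mset L \<subseteq> D}. jn (splt a) = a" using jn_splt by blast
  show "\<forall>a'\<in>PiE {..<N} (\<lambda>_. UNIV). splt (jn a') = a'" using splt_jn by blast
  show "splt ` {L. set_mset L \<subseteq> D} \<subseteq> PiE {..<N} (\<lambda>_. UNIV)"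
    by (auto simp: splt_def split: if_splits)
  show "jn ` PiE {..<N} (\<lambda>_. UNIV) \<subseteq> {L. set_mset L \<subseteq> D}"
    using set_jn by blast
qed

lemma size_splt: "i < N \<Longrightarrow> size (splt L i) = size (filter_mset (\<lambda>v. cl v = i) L)"
  by (simp add: splt_def)

lemma count_splt:
  assumes L: "set_mset L \<subseteq> D" and i: "i < N"
  shows "count (splt L i) t = count L (rho i + N * t)"
proof -
  have "count L (rho i + N * t) = count (filter_mset (\<lambda>v. cl v = i) L) (rho i + N * t)"
    using H2[OF i] by simp
  also have "\<dots> = count (image_mset (\<lambda>t. rho i + N * t) (splt L i)) (rho i + N * t)"
    using filter_jn[OF i, of "splt L"] jn_splt[OF L] by simp
  also have "\<dots> = count (splt L i) t"
    by (rule count_image_inj) (use i in \<open>simp add: inj_def\<close>)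
  finally show ?thesis by simp
qed

lemma sum_splt:
  assumes L: "set_mset L \<subseteq> D"
  shows "sum_mset (image_mset g L) = (\<Sum>i<N. sum_mset (image_mset (\<lambda>t. g (rho i + N * t)) (splt L i)))"
proof -
  have "sum_mset (image_mset g L) = sum_mset (image_mset g (jn (splt L)))"
    using jn_splt[OF L] by simp
  also have "\<dots> = (\<Sum>i<N. sum_mset (image_mset (\<lambda>t. g (rho i + N * t)) (splt L i)))"
    unfolding jn_def by (simp add: image_mset_sum sum_mset_sum multiset.map_comp o_def)
  finally show ?thesis .
qed

end


definition Rg :: "(nat \<Rightarrow> bool) \<Rightarrow> nat \<Rightarrow> nat \<Rightarrow> bool" where
  "Rg g x y = (y < x \<or> (y = x \<and> g x))"

lemma transp_Rg: "transp (Rg g)"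
  unfolding transp_def Rg_def by auto

lemma count_ge2:
  assumes "i < j" "j < length xs" "xs ! i = xs ! j"
  shows "count (mset xs) (xs ! i) \<ge> 2"
proof -
  have xs: "xs = take (Suc i) xs @ drop (Suc i) xs" by simp
  have "xs ! i \<in> set (take (Suc i) xs)"
    using assms by (auto simp: in_set_conv_nth intro!: exI[of _ i])
  moreover have "xs ! j \<in> set (drop (Suc i) xs)"
    using assms by (auto simp: in_set_conv_nth intro!: exI[of _ "j - Suc i"])
  ultimately have c12: "count (mset (take (Suc i) xs)) (xs ! i) > 0" "count (mset (drop (Suc i) xs)) (xs ! i) > 0"
    using assms(3) by (simp_all only: count_greater_zero_iff set_mset_mset)
  have "count (mset xs) (xs ! i) = count (mset (take (Suc i) xs)) (xs ! i) + count (mset (drop (Suc i) xs)) (xs ! i)"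
    by (subst xs) (simp only: mset_append count_union)
  then show ?thesis using c12 by linarith
qed

lemma sorted_Rg_imp:
  "sorted_wrt (Rg g) xs \<Longrightarrow> \<not> g v \<Longrightarrow> count (mset xs) v \<le> 1"
proof (induction xs)
  case Nil then show ?case by simp
next
  case (Cons x xs)
  show ?case
  proof (cases "x = v")
    case True
    have "v \<notin> set xs" using Cons.prems True by (auto simp: Rg_def)
    then show ?thesis using True by (simp add: count_eq_zero_iff[symmetric] not_in_iff)
  next
    case False
    then show ?thesis using Cons by simp
  qed
qed

lemma sorted_Rg_iff:
  "sorted_wrt (Rg g) xs \<longleftrightarrow> sorted_wrt (\<lambda>x y. y \<le> x) xs \<and> (\<forall>v. \<not> g v \<longrightarrow> count (mset xs) v \<le> 1)"
proof
  assume a: "sorted_wrt (Rg g) xs"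
  have "sorted_wrt (\<lambda>x y. y \<le> x) xs"
    by (rule sorted_wrt_mono_rel[OF _ a]) (auto simp: Rg_def)
  then show "sorted_wrt (\<lambda>x y. y \<le> x) xs \<and> (\<forall>v. \<not> g v \<longrightarrow> count (mset xs) v \<le> 1)"
    using sorted_Rg_imp[OF a] by blast
next
  assume a: "sorted_wrt (\<lambda>x y. y \<le> x) xs \<and> (\<forall>v. \<not> g v \<longrightarrow> count (mset xs) v \<le> 1)"
  show "sorted_wrt (Rg g) xs"
    unfolding sorted_wrt_iff_nth_less
  proof (intro allI impI)
    fix i j assume ij: "i < j" "j < length xs"
    have le: "xs ! j \<le> xs ! i" using a ij by (auto simp: sorted_wrt_iff_nth_less)
    show "Rg g (xs ! i) (xs ! j)"
    proof (cases "xs ! j = xs ! i")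
      case True
      have "count (mset xs) (xs ! i) \<ge> 2" using count_ge2[OF ij] True by simp
      then have "g (xs ! i)"
      proof -
        assume c2: "count (mset xs) (xs ! i) \<ge> 2"
        show "g (xs ! i)"
        proof (rule ccontr)
          assume "\<not> g (xs ! i)"
          then have "count (mset xs) (xs ! i) \<le> 1" using a by blast
          then show False using c2 by simp
        qed
      qed
      then show ?thesis using True by (simp add: Rg_def)
    next
      case False
      then show ?thesis using le by (simp add: Rg_def)
    qed
  qed
qed

lemma desc_unique:
  assumes "sorted_wrt (\<lambda>x y. y \<le> x) xs" "sorted_wrt (\<lambda>x y. y \<le> x) ys" "mset xs = mset (ys :: nat list)"
  shows "xs = ys"
proof -
  have sx: "sorted (rev xs)" "sorted (rev ys)" using assms(1,2) by (simp_all add: sorted_wrt_rev)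
  have "sort (rev ys) = rev xs" by (rule properties_for_sort) (use assms(3) sx in simp_all)
  moreover have "sort (rev ys) = rev ys" using sx(2) by (rule sorted_sort_id)
  ultimately show ?thesis by simp
qed

lemma desc_of_mset: "sorted_wrt (\<lambda>x y. y \<le> x) (rev (sorted_list_of_multiset M))"
  by (simp add: sorted_wrt_rev)

lemma supp_down:
  fixes f :: "nat \<Rightarrow> nat"
  assumes "\<forall>j. f (Suc j) \<le> f j" "finite {j. f j \<noteq> 0}"
  shows "f j \<noteq> 0 \<longleftrightarrow> j < card {j. f j \<noteq> 0}"
proof
  have dc: "f i \<noteq> 0" if "i \<le> j'" "f j' \<noteq> 0" for i j'
    using lift_Suc_antimono_le[of f i j'] assms(1) that by auto
  assume "f j \<noteq> 0"
  then have "{..j} \<subseteq> {j. f j \<noteq> 0}" using dc by auto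
  then have "card {..j} \<le> card {j. f j \<noteq> 0}" using assms(2) by (rule card_mono[rotated])
  then show "j < card {j. f j \<noteq> 0}" by simp
next
  assume j: "j < card {j. f j \<noteq> 0}"
  show "f j \<noteq> 0"
  proof
    assume f0: "f j = 0"
    have "{j. f j \<noteq> 0} \<subseteq> {..<j}"
    proof
      fix i assume "i \<in> {j. f j \<noteq> 0}"
      then have "f i \<noteq> 0" by simp
      moreover have "i \<ge> j \<Longrightarrow> f i \<le> f j" using lift_Suc_antimono_le[of f j i] assms(1) by auto
      ultimately show "i \<in> {..<j}" using f0 by (cases "i \<ge> j") auto
    qed
    then have "card {j. f j \<noteq> 0} \<le> card {..<j}" by (intro card_mono) simp_all
    then have "card {j. f j \<noteq> 0} \<le> j" by simp
    then show False using j by simp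
  qed
qed


definition Pairs :: "(int \<Rightarrow> int) \<Rightarrow> nat \<Rightarrow> nat \<Rightarrow> (nat multiset \<times> nat multiset) set" where
  "Pairs s k r = {(Lm, M). 0 \<notin># Lm \<and> size M = size Lm + r \<and>
     (\<forall>v. s (int k + int v) \<noteq> s (int k) \<longrightarrow> count Lm v \<le> 1) \<and>
     (\<forall>v. s (int k - int v) \<noteq> s (int k) \<longrightarrow> count M v \<le> 1)}"

definition phi :: "(nat \<Rightarrow> nat) \<times> nat list \<times> (nat \<Rightarrow> nat) \<Rightarrow> nat multiset \<times> nat multiset" where
  "phi x = (case x of (lam, nu, mu) \<Rightarrow>
     (mset (map lam [0..<card {j. lam j \<noteq> 0}]), mset nu + mset (map mu [0..<card {j. lam j \<noteq> 0}])))"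

definition wtP :: "nat \<Rightarrow> nat \<Rightarrow> nat multiset \<times> nat multiset \<Rightarrow> nat \<Rightarrow> int" where
  "wtP N k P i = (case P of (Lm, M) \<Rightarrow>
     sum_mset (image_mset (\<lambda>v. upexp N (int k) v i) Lm) + sum_mset (image_mset (\<lambda>v. downexp N (int k) v i) M))"

lemma Rg_le: "Rg g x y \<Longrightarrow> y \<le> x" by (auto simp: Rg_def)
lemma Rg_eq: "Rg g x y \<Longrightarrow> y = x \<Longrightarrow> g x" by (auto simp: Rg_def)

locale rs =
  fixes N :: nat and s :: "int \<Rightarrow> int" and k r :: nat
  assumes rpos: "r > 0"
begin

abbreviation "gl \<equiv> (\<lambda>v::nat. s (int k + int v) = s (int k))"
abbreviation "gm \<equiv> (\<lambda>v::nat. s (int k - int v) = s (int k))"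

lemma rset_props:
  assumes x: "(lam, nu, mu) \<in> Rset N s k r"
  defines "L \<equiv> card {j. lam j \<noteq> 0}"
  shows "\<And>j. lam j \<noteq> 0 \<longleftrightarrow> j < L"
    and "\<And>j. j \<ge> L \<Longrightarrow> mu j = 0"
    and "sorted_wrt (Rg gl) (map lam [0..<L])"
    and "sorted_wrt (Rg gm) (nu @ map mu [0..<L])"
    and "length nu = r"
proof -
  have P: "(lam, mu) \<in> Pk N s (int k) (s (int k))" and ln: "length nu = r"
    and nu1: "\<forall>j. Suc j < r \<longrightarrow> nu ! Suc j \<le> nu ! j"
    and nu2: "\<forall>j. Suc j < r \<longrightarrow> nu ! Suc j = nu ! j \<longrightarrow> s (int k - int (nu ! j)) = s (int k)"
    and nb1: "nu ! (r - 1) \<ge> mu 0"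
    and nb2: "nu ! (r - 1) = mu 0 \<longrightarrow> s (int k - int (mu 0)) = s (int k)"
    using x unfolding Rset_def by auto
  have l1: "\<forall>j. lam (Suc j) \<le> lam j" and m1: "\<forall>j. mu (Suc j) \<le> mu j"
    and fl: "finite {j. lam j \<noteq> 0}"
    and lm0: "\<forall>j. lam j = 0 \<longrightarrow> mu j = 0"
    and l2: "\<forall>j. lam j = lam (Suc j) \<longrightarrow> s (int k + int (lam j)) = s (int k) \<or> (lam j = 0 \<and> mu j = 0)"
    and m2: "\<forall>j. mu j = mu (Suc j) \<longrightarrow> s (int k - int (mu j)) = s (int k) \<or> (mu j = 0 \<and> lam (Suc j) = 0)"
    using P unfolding Pk_def by auto
  show supp: "lam j \<noteq> 0 \<longleftrightarrow> j < L" for j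
    unfolding L_def by (rule supp_down[OF l1 fl])
  show mu0: "j \<ge> L \<Longrightarrow> mu j = 0" for j
    using supp[of j] lm0 by auto
  show "length nu = r" by (rule ln)
  show "sorted_wrt (Rg gl) (map lam [0..<L])"
    unfolding sorted_wrt_iff_nth_Suc_transp[OF transp_Rg]
  proof (intro allI impI)
    fix i assume i: "Suc i < length (map lam [0..<L])"
    then have i': "Suc i < L" by simp
    have "lam (Suc i) \<le> lam i" using l1 by blast
    moreover have "lam i = lam (Suc i) \<Longrightarrow> gl (lam i)"
      using l2 supp[of i] i' by auto
    ultimately have "Rg gl (lam i) (lam (Suc i))" by (auto simp: Rg_def)
    then show "Rg gl (map lam [0..<L] ! i) (map lam [0..<L] ! Suc i)"
      using i' by (simp del: upt_Suc)
  qed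
  show "sorted_wrt (Rg gm) (nu @ map mu [0..<L])"
    unfolding sorted_wrt_iff_nth_Suc_transp[OF transp_Rg]
  proof (intro allI impI)
    fix p assume p: "Suc p < length (nu @ map mu [0..<L])"
    then have p': "Suc p < r + L" using ln by simp
    consider (a) "Suc p < r" | (b) "Suc p = r" | (c) "Suc p > r" by linarith
    then show "Rg gm ((nu @ map mu [0..<L]) ! p) ((nu @ map mu [0..<L]) ! Suc p)"
    proof cases
      case a
      then have "Rg gm (nu ! p) (nu ! Suc p)" using nu1 nu2 by (auto simp: Rg_def)
      then show ?thesis using a ln by (simp add: nth_append)
    next
      case b
      then have "Rg gm (nu ! (r - 1)) (mu 0)" using nb1 nb2 by (auto simp: Rg_def)
      moreover have "r - 1 = p" using b by simp
      ultimately have "Rg gm (nu ! p) (mu 0)" by simp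
      then show ?thesis using b ln p' by (simp add: nth_append)
    next
      case c
      define j where "j = p - r"
      have pj: "p = r + j" "Suc j < L" using c p' unfolding j_def by auto
      have "mu (Suc j) \<le> mu j" using m1 by blast
      moreover have "mu j = mu (Suc j) \<Longrightarrow> gm (mu j)"
        using m2 supp[of "Suc j"] pj by auto
      ultimately have "Rg gm (mu j) (mu (Suc j))" by (auto simp: Rg_def)
      then show ?thesis using pj ln by (simp add: nth_append del: upt_Suc)
    qed
  qed
qed

lemma phi_in: "x \<in> Rset N s k r \<Longrightarrow> phi x \<in> Pairs s k r"
proof -
  assume x: "x \<in> Rset N s k r"
  obtain lam nu mu where xe: "x = (lam, nu, mu)" by (cases x) auto
  define L where "L = card {j. lam j \<noteq> 0}"
  note pr = rset_props[OF x[unfolded xe], folded L_def]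
  have "0 \<notin># mset (map lam [0..<L])"
  proof
    assume "0 \<in># mset (map lam [0..<L])"
    then obtain j where "j < L" "lam j = 0" by auto
    then show False using pr(1)[of j] by simp
  qed
  moreover have "\<forall>v. \<not> gl v \<longrightarrow> count (mset (map lam [0..<L])) v \<le> 1"
    using conjunct2[OF iffD1[OF sorted_Rg_iff pr(3)]] by simp
  moreover have "\<forall>v. \<not> gm v \<longrightarrow> count (mset (nu @ map mu [0..<L])) v \<le> 1"
    using conjunct2[OF iffD1[OF sorted_Rg_iff pr(4)]] by simp
  ultimately show ?thesis
    unfolding xe phi_def Pairs_def using pr(5) L_def by (simp add: add.commute)
qed

lemma phi_inj: "inj_on phi (Rset N s k r)"
proof (rule inj_onI)
  fix x y assume x: "x \<in> Rset N s k r" and y: "y \<in> Rset N s k r" and e: "phi x = phi y"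
  obtain lam nu mu where xe: "x = (lam, nu, mu)" by (cases x) auto
  obtain lam' nu' mu' where ye: "y = (lam', nu', mu')" by (cases y) auto
  define L where "L = card {j. lam j \<noteq> 0}"
  define L' where "L' = card {j. lam' j \<noteq> 0}"
  note px = rset_props[OF x[unfolded xe], folded L_def]
  note py = rset_props[OF y[unfolded ye], folded L'_def]
  have e1: "mset (map lam [0..<L]) = mset (map lam' [0..<L'])"
    and e2: "mset (nu @ map mu [0..<L]) = mset (nu' @ map mu' [0..<L'])"
    using e unfolding xe ye phi_def L_def L'_def by auto
  have LL: "L' = L" using arg_cong[OF e1, of size] by simp
  have ml: "map lam [0..<L] = map lam' [0..<L]"
    using desc_unique[OF conjunct1[OF iffD1[OF sorted_Rg_iff px(3)]] conjunct1[OF iffD1[OF sorted_Rg_iff py(3)]]] e1 LL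
    by simp
  have lamq: "lam = lam'"
  proof (rule ext)
    fix j show "lam j = lam' j"
    proof (cases "j < L")
      case True then show ?thesis using ml nth_map_upt[of j L 0 lam] nth_map_upt[of j L 0 lam'] by (metis add_0 diff_zero)
    next
      case False then show ?thesis using px(1)[of j] py(1)[of j] LL by auto
    qed
  qed
  have ml2: "nu @ map mu [0..<L] = nu' @ map mu' [0..<L]"
    using desc_unique[OF conjunct1[OF iffD1[OF sorted_Rg_iff px(4)]] conjunct1[OF iffD1[OF sorted_Rg_iff py(4)]]] e2 LL
    by simp
  have nuq: "nu = nu'" using ml2 px(5) py(5) by (metis append_eq_append_conv)
  have mmap: "map mu [0..<L] = map mu' [0..<L]" using ml2 nuq by simp
  have muq: "mu = mu'"
  proof (rule ext)
    fix j show "mu j = mu' j"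
    proof (cases "j < L")
      case True then show ?thesis using mmap nth_map_upt[of j L 0 mu] nth_map_upt[of j L 0 mu'] by (metis add_0 diff_zero)
    next
      case False then show ?thesis using px(2)[of j] py(2)[of j] LL by auto
    qed
  qed
  show "x = y" using xe ye lamq nuq muq by simp
qed

end


context rs
begin

lemma phi_surj:
  assumes P: "(Lm, M) \<in> Pairs s k r"
  shows "\<exists>x \<in> Rset N s k r. phi x = (Lm, M)"
proof -
  have n0: "0 \<notin># Lm" and szM: "size M = size Lm + r"
    and cl: "\<forall>v. \<not> gl v \<longrightarrow> count Lm v \<le> 1" and cm: "\<forall>v. \<not> gm v \<longrightarrow> count M v \<le> 1"
    using P unfolding Pairs_def by auto
  define ls where "ls = rev (sorted_list_of_multiset Lm)"
  define ms where "ms = rev (sorted_list_of_multiset M)"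
  define L where "L = size Lm"
  have mls: "mset ls = Lm" and mms: "mset ms = M" unfolding ls_def ms_def by simp_all
  have lls: "length ls = L" unfolding L_def using mls by (metis size_mset)
  have lms: "length ms = r + L" unfolding L_def using mms szM by (metis size_mset add.commute)
  have sls: "sorted_wrt (Rg gl) ls"
    unfolding sorted_Rg_iff using desc_of_mset[of Lm] cl mls ls_def by simp
  have sms: "sorted_wrt (Rg gm) ms"
    unfolding sorted_Rg_iff using desc_of_mset[of M] cm mms ms_def by simp
  have lsR: "Rg gl (ls ! i) (ls ! j)" if "i < j" "j < L" for i j
    using sorted_wrt_nth_less[OF sls that(1)] that lls by simp
  have msR: "Rg gm (ms ! i) (ms ! j)" if "i < j" "j < r + L" for i j
    using sorted_wrt_nth_less[OF sms that(1)] that lms by simp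
  have ls0: "ls ! j \<noteq> 0" if "j < L" for j
  proof
    assume "ls ! j = 0"
    then have "0 \<in> set ls" using that lls by (metis nth_mem)
    then show False using n0 mls by (metis set_mset_mset)
  qed
  define lam where "lam j = (if j < L then ls ! j else 0)" for j
  define nu where "nu = take r ms"
  define mu where "mu j = (if j < L then ms ! (r + j) else 0)" for j
  have supp: "lam j \<noteq> 0 \<longleftrightarrow> j < L" for j using ls0 unfolding lam_def by auto
  have suppset: "{j. lam j \<noteq> 0} = {..<L}" using supp by auto
  have cardL: "card {j. lam j \<noteq> 0} = L" using suppset by simp
  have lnu: "length nu = r" unfolding nu_def using lms by simp
  have nunth: "nu ! j = ms ! j" if "j < r" for j unfolding nu_def using that by simp
  have maplam: "map lam [0..<L] = ls"
    by (rule nth_equalityI) (simp_all add: lls lam_def)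
  have mapmu: "nu @ map mu [0..<L] = ms"
  proof (rule nth_equalityI)
    show "length (nu @ map mu [0..<L]) = length ms" using lnu lms by simp
    fix p assume "p < length (nu @ map mu [0..<L])"
    then have p: "p < r + L" using lnu by simp
    show "(nu @ map mu [0..<L]) ! p = ms ! p"
    proof (cases "p < r")
      case True then show ?thesis using lnu nunth by (simp add: nth_append)
    next
      case False
      then have "p - r < L" using p by simp
      then show ?thesis using False lnu by (simp add: nth_append mu_def)
    qed
  qed
  have Pk: "(lam, mu) \<in> Pk N s (int k) (s (int k))"
    unfolding Pk_def
  proof (intro CollectI case_prodI conjI allI impI)
    fix j
    show "lam (Suc j) \<le> lam j"
    proof (cases "Suc j < L")
      case True then show ?thesis using Rg_le[OF lsR[of j "Suc j"]] by (simp add: lam_def)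
    next
      case False then show ?thesis by (simp add: lam_def)
    qed
    show "mu (Suc j) \<le> mu j"
    proof (cases "Suc j < L")
      case True then show ?thesis using Rg_le[OF msR[of "r + j" "r + Suc j"]] by (simp add: mu_def)
    next
      case False then show ?thesis by (simp add: mu_def)
    qed
    show "lam j = 0 \<Longrightarrow> mu j = 0" using supp[of j] by (simp add: mu_def)
    show "s (int k + int (lam j)) = s (int k) \<or> lam j = 0 \<and> mu j = 0" if "lam j = lam (Suc j)"
    proof (cases "Suc j < L")
      case True then show ?thesis using Rg_eq[OF lsR[of j "Suc j"]] that by (simp add: lam_def)
    next
      case False
      then have "lam (Suc j) = 0" using supp[of "Suc j"] by simp
      then have "lam j = 0" using that by simp
      then show ?thesis using supp[of j] by (simp add: mu_def)
    qed
    show "s (int k - int (mu j)) = s (int k) \<or> mu j = 0 \<and> lam (Suc j) = 0" if "mu j = mu (Suc j)"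
    proof (cases "Suc j < L")
      case True then show ?thesis using Rg_eq[OF msR[of "r + j" "r + Suc j"]] that by (simp add: mu_def)
    next
      case False
      then have "mu (Suc j) = 0" "lam (Suc j) = 0" using supp[of "Suc j"] by (simp_all add: mu_def)
      then show ?thesis using that by simp
    qed
  next
    show "finite {j. lam j \<noteq> 0}" using suppset by simp
    show "finite {j. mu j \<noteq> 0}" by (rule finite_subset[of _ "{..<L}"]) (auto simp: mu_def split: if_splits)
  qed
  have "(lam, nu, mu) \<in> Rset N s k r"
    unfolding Rset_def
  proof (intro CollectI case_prodI conjI allI impI)
    show "(lam, mu) \<in> Pk N s (int k) (s (int k))" by (rule Pk)
    show "length nu = r" by (rule lnu)
    fix j
    show "nu ! Suc j \<le> nu ! j" if "Suc j < r"
      using Rg_le[OF msR[of j "Suc j"]] that nunth by simp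
    show "s (int k - int (nu ! j)) = s (int k)" if "Suc j < r" "nu ! Suc j = nu ! j"
      using Rg_eq[OF msR[of j "Suc j"]] that nunth by simp
  next
    have "nu ! (r - 1) \<ge> mu 0 \<and> (nu ! (r - 1) = mu 0 \<longrightarrow> gm (mu 0))"
    proof (cases "0 < L")
      case True
      have R: "Rg gm (ms ! (r - 1)) (ms ! r)" using msR[of "r - 1" r] True rpos by simp
      have m0: "mu 0 = ms ! r" using True by (simp add: mu_def)
      have n1: "nu ! (r - 1) = ms ! (r - 1)" using nunth[of "r - 1"] rpos by simp
      show ?thesis unfolding m0 n1 using Rg_le[OF R] Rg_eq[OF R] by metis
    next
      case False
      then show ?thesis by (simp add: mu_def)
    qed
    then show "nu ! (r - 1) \<ge> mu 0" "nu ! (r - 1) = mu 0 \<Longrightarrow> s (int k - int (mu 0)) = s (int k)"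
      by auto
  qed
  moreover have "phi (lam, nu, mu) = (Lm, M)"
  proof -
    have "phi (lam, nu, mu) = (mset (map lam [0..<L]), mset nu + mset (map mu [0..<L]))"
      by (simp only: phi_def cardL prod.case)
    also have "\<dots> = (Lm, M)" using maplam mapmu mls mms by (metis mset_append)
    finally show ?thesis .
  qed
  ultimately show ?thesis by blast
qed

lemma phi_bij: "bij_betw phi (Rset N s k r) (Pairs s k r)"
  unfolding bij_betw_def
proof
  show "inj_on phi (Rset N s k r)" by (rule phi_inj)
  show "phi ` Rset N s k r = Pairs s k r"
  proof
    show "phi ` Rset N s k r \<subseteq> Pairs s k r" using phi_in by blast
    show "Pairs s k r \<subseteq> phi ` Rset N s k r"
    proof
      fix P assume "P \<in> Pairs s k r"
      then obtain Lm M where "P = (Lm, M)" "(Lm, M) \<in> Pairs s k r" by (cases P) auto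
      then show "P \<in> phi ` Rset N s k r" using phi_surj by (metis image_iff)
    qed
  qed
qed

lemma downexp0: "downexp N k 0 i = 0"
  by (simp add: downexp_def)

lemma wt_phi:
  assumes x: "x \<in> Rset N s k r"
  shows "wtR N k x = wtP N k (phi x)"
proof (rule ext)
  fix i
  obtain lam nu mu where xe: "x = (lam, nu, mu)" by (cases x) auto
  define L where "L = card {j. lam j \<noteq> 0}"
  note pr = rset_props[OF x[unfolded xe], folded L_def]
  have s1: "{j. lam j \<noteq> 0} = {..<L}" using pr(1) by auto
  have s2: "(\<Sum>j\<in>{j. mu j \<noteq> 0}. downexp N (int k) (mu j) i) = (\<Sum>j<L. downexp N (int k) (mu j) i)"
  proof (rule sum.mono_neutral_left)
    show "{j. mu j \<noteq> 0} \<subseteq> {..<L}"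
    proof
      fix j assume "j \<in> {j. mu j \<noteq> 0}"
      then have "mu j \<noteq> 0" by simp
      have "\<not> j \<ge> L"
      proof
        assume "j \<ge> L"
        then have "mu j = 0" by (rule pr(2))
        then show False using \<open>mu j \<noteq> 0\<close> by simp
      qed
      then show "j \<in> {..<L}" by simp
    qed
    show "\<forall>j\<in>{..<L} - {j. mu j \<noteq> 0}. downexp N (int k) (mu j) i = 0" by (simp add: downexp0)
  qed simp
  have e1: "sum_mset (image_mset (\<lambda>v. upexp N (int k) v i) (mset (map lam [0..<L]))) = (\<Sum>j<L. upexp N (int k) (lam j) i)"
    by (simp add: sum_mset_sum_list interv_sum_list_conv_sum_set_nat atLeast0LessThan flip: mset_map)
  have e2: "sum_mset (image_mset (\<lambda>v. downexp N (int k) v i) (mset (map mu [0..<L]))) = (\<Sum>j<L. downexp N (int k) (mu j) i)"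
    by (simp add: sum_mset_sum_list interv_sum_list_conv_sum_set_nat atLeast0LessThan flip: mset_map)
  have e3: "sum_mset (image_mset (\<lambda>v. downexp N (int k) v i) (mset nu)) = (\<Sum>j<length nu. downexp N (int k) (nu ! j) i)"
    by (simp add: sum_mset_sum_list sum_list_sum_nth atLeast0LessThan flip: mset_map)
  have w1: "wtR N k x i = (\<Sum>j<L. upexp N (int k) (lam j) i) + (\<Sum>j<L. downexp N (int k) (mu j) i)
      + (\<Sum>j<length nu. downexp N (int k) (nu ! j) i)"
    by (simp only: xe wtR_def wtk_def prod.case s1 s2)
  have ph: "phi x = (mset (map lam [0..<L]), mset nu + mset (map mu [0..<L]))"
    by (simp only: xe phi_def L_def prod.case)
  have w2: "wtP N k (phi x) i = sum_mset (image_mset (\<lambda>v. upexp N (int k) v i) (mset (map lam [0..<L])))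
      + (sum_mset (image_mset (\<lambda>v. downexp N (int k) v i) (mset nu))
      + sum_mset (image_mset (\<lambda>v. downexp N (int k) v i) (mset (map mu [0..<L]))))"
    by (simp only: ph wtP_def prod.case image_mset_union sum_mset.union)
  show "wtR N k x i = wtP N k (phi x) i"
    unfolding w1 w2 e1 e2 e3 by simp
qed

end


lemma period_one:
  assumes N: "0 < N"
  shows "card {t::nat. l \<le> t \<and> t < l + N \<and> int t mod int N = \<rho> mod int N} = 1"
proof -
  define m where "m = (\<rho> - int l) mod int N"
  have m0: "0 \<le> m" "m < int N" unfolding m_def using N by simp_all
  have "{t::nat. l \<le> t \<and> t < l + N \<and> int t mod int N = \<rho> mod int N} = {l + nat m}"
  proof (rule set_eqI, rule iffI)
    fix t assume "t \<in> {t::nat. l \<le> t \<and> t < l + N \<and> int t mod int N = \<rho> mod int N}"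
    then have t: "l \<le> t" "t < l + N" "int t mod int N = \<rho> mod int N" by auto
    define x where "x = int t - int l"
    have x0: "0 \<le> x" "x < int N" using t unfolding x_def by auto
    have "int N dvd (int t - \<rho>)" using t(3) by (simp add: mod_eq_dvd_iff)
    then have "int N dvd (x - (\<rho> - int l))" unfolding x_def by (simp add: algebra_simps)
    then have "x mod int N = (\<rho> - int l) mod int N" by (simp add: mod_eq_dvd_iff)
    moreover have "x mod int N = x" using x0 by simp
    ultimately have "x = m" unfolding m_def by simp
    then show "t \<in> {l + nat m}" unfolding x_def using t m0 by auto
  next
    fix t assume "t \<in> {l + nat m}"
    then have t: "t = l + nat m" by simp
    have "int t = int l + m" using t m0 by simp
    moreover have "int N dvd (int l + m - \<rho>)"
    proof -
      have "int N dvd (m - (\<rho> - int l))" unfolding m_def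
        using mod_eq_dvd_iff[of "(\<rho> - int l) mod int N" "int N" "\<rho> - int l"] by simp
      then show ?thesis by (simp add: algebra_simps)
    qed
    ultimately have "int t mod int N = \<rho> mod int N" by (simp add: mod_eq_dvd_iff)
    then show "t \<in> {t::nat. l \<le> t \<and> t < l + N \<and> int t mod int N = \<rho> mod int N}"
      using t m0 by auto
  qed
  then show ?thesis by simp
qed

lemma split_card_period:
  assumes "0 < N"
  shows "card {t::nat. t < l + N \<and> P t} = card {t. t < l \<and> P t} + card {t. l \<le> t \<and> t < l + N \<and> P t}"
proof -
  have "{t::nat. t < l + N \<and> P t} = {t. t < l \<and> P t} \<union> {t. l \<le> t \<and> t < l + N \<and> P t}" by auto
  moreover have "finite {t::nat. t < l \<and> P t}" "finite {t. l \<le> t \<and> t < l + N \<and> P t}" by auto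
  ultimately show ?thesis by (simp add: card_Un_disjoint disjoint_iff)
qed

lemma upexp_step:
  assumes N: "0 < N" and i: "i < N"
  shows "upexp N k (l + N) i = upexp N k l i + 1"
proof -
  have eq: "(k + int t) mod int N = int i \<longleftrightarrow> int t mod int N = (int i - k) mod int N" for t
  proof -
    have "(k + int t) mod int N = int i \<longleftrightarrow> (k + int t) mod int N = int i mod int N" using i by simp
    also have "\<dots> \<longleftrightarrow> int N dvd (k + int t - int i)" by (simp add: mod_eq_dvd_iff)
    also have "\<dots> \<longleftrightarrow> int N dvd (int t - (int i - k))" by (simp add: algebra_simps)
    also have "\<dots> \<longleftrightarrow> int t mod int N = (int i - k) mod int N" by (simp add: mod_eq_dvd_iff)
    finally show ?thesis .
  qed
  have "card {t. t < l + N \<and> (k + int t) mod int N = int i} =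
      card {t. t < l \<and> (k + int t) mod int N = int i} + card {t. l \<le> t \<and> t < l + N \<and> (k + int t) mod int N = int i}"
    by (rule split_card_period[OF N])
  moreover have "card {t. l \<le> t \<and> t < l + N \<and> (k + int t) mod int N = int i} = 1"
    unfolding eq by (rule period_one[OF N])
  ultimately show ?thesis unfolding upexp_def by simp
qed

lemma upexp_steps:
  assumes N: "0 < N" and i: "i < N"
  shows "upexp N k (l + N * t) i = upexp N k l i + int t"
proof (induction t)
  case 0 then show ?case by simp
next
  case (Suc t)
  have "upexp N k (l + N * Suc t) i = upexp N k ((l + N * t) + N) i" by (simp add: algebra_simps)
  also have "\<dots> = upexp N k (l + N * t) i + 1" by (rule upexp_step[OF N i])
  finally show ?case using Suc by simp
qed

lemma downexp_alt: "downexp N k l i = int (card {t. t < l \<and> (k - 1 - int t) mod int N = int i})"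
proof -
  have "bij_betw Suc {t. t < l \<and> (k - 1 - int t) mod int N = int i} {t. 1 \<le> t \<and> t \<le> l \<and> (k - int t) mod int N = int i}"
  proof (rule bij_betw_byWitness[where f'="\<lambda>t. t - 1"])
    show "Suc ` {t. t < l \<and> (k - 1 - int t) mod int N = int i} \<subseteq> {t. 1 \<le> t \<and> t \<le> l \<and> (k - int t) mod int N = int i}"
      by (auto simp: algebra_simps)
    show "(\<lambda>t. t - 1) ` {t. 1 \<le> t \<and> t \<le> l \<and> (k - int t) mod int N = int i} \<subseteq> {t. t < l \<and> (k - 1 - int t) mod int N = int i}"
    proof (rule image_subsetI)
      fix t assume "t \<in> {t. 1 \<le> t \<and> t \<le> l \<and> (k - int t) mod int N = int i}"
      then have t: "1 \<le> t" "t \<le> l" "(k - int t) mod int N = int i" by auto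
      have "k - 1 - int (t - 1) = k - int t" using t(1) by (simp add: of_nat_diff)
      then show "t - 1 \<in> {t. t < l \<and> (k - 1 - int t) mod int N = int i}" using t by auto
    qed
  qed auto
  then have "card {t. t < l \<and> (k - 1 - int t) mod int N = int i} = card {t. 1 \<le> t \<and> t \<le> l \<and> (k - int t) mod int N = int i}"
    by (rule bij_betw_same_card)
  then show ?thesis unfolding downexp_def by simp
qed

lemma downexp_step:
  assumes N: "0 < N" and i: "i < N"
  shows "downexp N k (l + N) i = downexp N k l i + 1"
proof -
  have eq: "(k - 1 - int t) mod int N = int i \<longleftrightarrow> int t mod int N = (k - 1 - int i) mod int N" for t
  proof -
    have "(k - 1 - int t) mod int N = int i \<longleftrightarrow> (k - 1 - int t) mod int N = int i mod int N" using i by simp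
    also have "\<dots> \<longleftrightarrow> int N dvd (k - 1 - int t - int i)" by (simp add: mod_eq_dvd_iff)
    also have "\<dots> \<longleftrightarrow> int N dvd (int t - (k - 1 - int i))"
    proof -
      have "k - 1 - int t - int i = - (int t - (k - 1 - int i))" by simp
      then show ?thesis by (simp only: dvd_minus_iff)
    qed
    also have "\<dots> \<longleftrightarrow> int t mod int N = (k - 1 - int i) mod int N" by (simp add: mod_eq_dvd_iff)
    finally show ?thesis .
  qed
  have "card {t. t < l + N \<and> (k - 1 - int t) mod int N = int i} =
      card {t. t < l \<and> (k - 1 - int t) mod int N = int i} + card {t. l \<le> t \<and> t < l + N \<and> (k - 1 - int t) mod int N = int i}"
    by (rule split_card_period[OF N])
  moreover have "card {t. l \<le> t \<and> t < l + N \<and> (k - 1 - int t) mod int N = int i} = 1"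
    unfolding eq by (rule period_one[OF N])
  ultimately show ?thesis unfolding downexp_alt by simp
qed

lemma downexp_steps:
  assumes N: "0 < N" and i: "i < N"
  shows "downexp N k (l + N * t) i = downexp N k l i + int t"
proof (induction t)
  case 0 then show ?case by simp
next
  case (Suc t)
  have "downexp N k (l + N * Suc t) i = downexp N k ((l + N * t) + N) i" by (simp add: algebra_simps)
  also have "\<dots> = downexp N k (l + N * t) i + 1" by (rule downexp_step[OF N i])
  finally show ?case using Suc by simp
qed

lemma upexp_zr:
  assumes "k \<le> j"
  shows "upexp N (int k) (j - k + 1) i = zr N k j i"
proof -
  have "bij_betw (\<lambda>t. k + t) {t. t < j - k + 1 \<and> (int k + int t) mod int N = int i} {u. k \<le> u \<and> u \<le> j \<and> u mod N = i}"
  proof (rule bij_betw_byWitness[where f'="\<lambda>u. u - k"])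
    show "(\<lambda>t. k + t) ` {t. t < j - k + 1 \<and> (int k + int t) mod int N = int i} \<subseteq> {u. k \<le> u \<and> u \<le> j \<and> u mod N = i}"
    proof (rule image_subsetI)
      fix t assume "t \<in> {t. t < j - k + 1 \<and> (int k + int t) mod int N = int i}"
      then have t: "t < j - k + 1" "(int k + int t) mod int N = int i" by auto
      have "int ((k + t) mod N) = int i" using t(2) by (simp add: zmod_int)
      then show "k + t \<in> {u. k \<le> u \<and> u \<le> j \<and> u mod N = i}" using t(1) assms by auto
    qed
    show "(\<lambda>u. u - k) ` {u. k \<le> u \<and> u \<le> j \<and> u mod N = i} \<subseteq> {t. t < j - k + 1 \<and> (int k + int t) mod int N = int i}"
    proof (rule image_subsetI)
      fix u assume "u \<in> {u. k \<le> u \<and> u \<le> j \<and> u mod N = i}"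
      then have u: "k \<le> u" "u \<le> j" "u mod N = i" by auto
      have "int k + int (u - k) = int u" using u(1) by simp
      then have "(int k + int (u - k)) mod int N = int i" using u(3) by (simp add: zmod_int[symmetric])
      then show "u - k \<in> {t. t < j - k + 1 \<and> (int k + int t) mod int N = int i}" using u by auto
    qed
  qed auto
  then have "card {t. t < j - k + 1 \<and> (int k + int t) mod int N = int i} = card {u. k \<le> u \<and> u \<le> j \<and> u mod N = i}"
    by (rule bij_betw_same_card)
  then show ?thesis unfolding upexp_def zr_def by simp
qed

lemma downexp_zr:
  assumes "k < j" "j \<le> N + k - 1"
  shows "downexp N (int k) (N + k - j) i = zr N j (N + k - 1) i"
proof -
  have "bij_betw (\<lambda>t. N + k - t) {t. 1 \<le> t \<and> t \<le> N + k - j \<and> (int k - int t) mod int N = int i}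
      {u. j \<le> u \<and> u \<le> N + k - 1 \<and> u mod N = i}"
  proof (rule bij_betw_byWitness[where f'="\<lambda>u. N + k - u"])
    show "(\<lambda>t. N + k - t) ` {t. 1 \<le> t \<and> t \<le> N + k - j \<and> (int k - int t) mod int N = int i}
      \<subseteq> {u. j \<le> u \<and> u \<le> N + k - 1 \<and> u mod N = i}"
    proof (rule image_subsetI)
      fix t assume "t \<in> {t. 1 \<le> t \<and> t \<le> N + k - j \<and> (int k - int t) mod int N = int i}"
      then have t: "1 \<le> t" "t \<le> N + k - j" "(int k - int t) mod int N = int i" by auto
      have e: "int (N + k - t) = (int k - int t) + int N * 1" using t assms by (simp add: of_nat_diff)
      have "int ((N + k - t) mod N) = int i" unfolding zmod_int e using t(3) by simp
      then show "N + k - t \<in> {u. j \<le> u \<and> u \<le> N + k - 1 \<and> u mod N = i}" using t assms by auto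
    qed
    show "(\<lambda>u. N + k - u) ` {u. j \<le> u \<and> u \<le> N + k - 1 \<and> u mod N = i}
      \<subseteq> {t. 1 \<le> t \<and> t \<le> N + k - j \<and> (int k - int t) mod int N = int i}"
    proof (rule image_subsetI)
      fix u assume "u \<in> {u. j \<le> u \<and> u \<le> N + k - 1 \<and> u mod N = i}"
      then have u: "j \<le> u" "u \<le> N + k - 1" "u mod N = i" by auto
      have e: "int k - int (N + k - u) = int u + int N * (-1)" using u assms by (simp add: of_nat_diff)
      have "(int k - int (N + k - u)) mod int N = int i" unfolding e using u(3)
        by (simp add: zmod_int[symmetric])
      then show "N + k - u \<in> {t. 1 \<le> t \<and> t \<le> N + k - j \<and> (int k - int t) mod int N = int i}"
        using u assms by auto
    qed
  qed (use assms in auto)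
  then have "card {t. 1 \<le> t \<and> t \<le> N + k - j \<and> (int k - int t) mod int N = int i} = card {u. j \<le> u \<and> u \<le> N + k - 1 \<and> u mod N = i}"
    by (rule bij_betw_same_card)
  then show ?thesis unfolding downexp_def zr_def by simp
qed

lemma zr_full:
  assumes N: "0 < N" and i: "i < N"
  shows "zr N k (N + k - 1) i = 1"
proof -
  have "zr N k (N + k - 1) i = upexp N (int k) (N + k - 1 - k + 1) i"
    using N by (intro upexp_zr[symmetric]) simp
  also have "N + k - 1 - k + 1 = 0 + N * 1" using N by simp
  also have "upexp N (int k) (0 + N * 1) i = upexp N (int k) 0 i + 1"
    using upexp_step[OF N i, of "int k" 0] by simp
  finally show ?thesis by (simp add: upexp_def)
qed

lemma upexp_high: "0 < N \<Longrightarrow> i \<ge> N \<Longrightarrow> upexp N k l i = 0"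
proof -
  assume i: "i \<ge> N" and N0: "0 < N"
  have "{t. t < l \<and> (k + int t) mod int N = int i} = {}"
  proof (cases "N = 0")
    case True then show ?thesis using N0 by simp
  next
    case False
    have "(k + int t) mod int N \<noteq> int i" for t
    proof -
      have "(k + int t) mod int N < int N" using N0 by simp
      moreover have "int N \<le> int i" using i by simp
      ultimately show ?thesis by linarith
    qed
    then show ?thesis by auto
  qed
  then show ?thesis unfolding upexp_def by simp
qed

lemma downexp_high: "0 < N \<Longrightarrow> i \<ge> N \<Longrightarrow> downexp N k l i = 0"
proof -
  assume i: "i \<ge> N" and N0: "0 < N"
  have "{t. 1 \<le> t \<and> t \<le> l \<and> (k - int t) mod int N = int i} = {}"
  proof (cases "N = 0")
    case True then show ?thesis using N0 by simp
  next
    case False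
    have "(k - int t) mod int N \<noteq> int i" for t
    proof -
      have "(k - int t) mod int N < int N" using N0 by simp
      moreover have "int N \<le> int i" using i by simp
      ultimately show ?thesis by linarith
    qed
    then show ?thesis by auto
  qed
  then show ?thesis unfolding downexp_def by simp
qed


lemma mod_form1:
  fixes c k N :: nat
  assumes "c < N" "k < N"
  shows "(c + (N - k)) mod N = (if k \<le> c then c - k else c + N - k)"
proof (cases "k \<le> c")
  case True
  have e: "c + (N - k) = (c - k) + N" using True assms by simp
  have "(c + (N - k)) mod N = (c - k) mod N" unfolding e by simp
  then show ?thesis using True assms by simp
next
  case False
  then show ?thesis using assms by simp
qed

lemma mod_form2:
  fixes c k N :: nat
  assumes "c < N" "k < N"
  shows "(k + (N - c)) mod N = (if c \<le> k then k - c else k + N - c)"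
  using mod_form1[OF assms(2,1)] by (simp add: add.commute)

lemma mod_invol:
  fixes k w N :: nat
  assumes N: "0 < N" and w: "w < N"
  shows "(k + (N - (k + (N - w)) mod N)) mod N = w"
proof -
  define z where "z = (k + (N - w)) mod N"
  have zN: "z < N" unfolding z_def using N by simp
  have iz: "int z = (int k + int N - int w) mod int N"
    unfolding z_def using w by (simp add: zmod_int of_nat_diff)
  have "int ((k + (N - z)) mod N) = (int k + int N - int z) mod int N"
    using zN by (simp add: zmod_int of_nat_diff)
  also have "\<dots> = (int k + int N - (int k + int N - int w)) mod int N"
    unfolding iz by (rule mod_diff_right_eq)
  also have "\<dots> = int w" using w by simp
  finally show ?thesis unfolding z_def by simp
qed

lemma s_period:
  assumes "\<forall>i. s (i + int N) = s i"
  shows "s (x + int N * m) = s x"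
proof -
  have pos: "s (y + int N * int n) = s y" for y n
  proof (induction n)
    case 0 then show ?case by simp
  next
    case (Suc n)
    have "s (y + int N * int (Suc n)) = s ((y + int N * int n) + int N)" by (simp add: algebra_simps)
    also have "\<dots> = s (y + int N * int n)" using assms by blast
    finally show ?case using Suc by simp
  qed
  show ?thesis
  proof (cases "m \<ge> 0")
    case True
    then show ?thesis using pos[of x "nat m"] by simp
  next
    case False
    have "s x = s ((x + int N * m) + int N * int (nat (- m)))" using False by simp
    then show ?thesis using pos[of "x + int N * m" "nat (- m)"] by simp
  qed
qed

lemma s_mod:
  assumes "\<forall>i. s (i + int N) = s i"
  shows "s x = s (x mod int N)"
  using s_period[OF assms, of "x mod int N" "x div int N"] by (simp add: algebra_simps)

locale mainloc =
  fixes N :: nat and s :: "int \<Rightarrow> int" and k r :: nat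
  assumes Npos: "0 < N" and kN: "k < N" and rpos: "0 < r"
    and sper: "\<forall>i. s (i + int N) = s i"
    and spm: "\<forall>i. s i = 1 \<or> s i = -1"
begin

definition cl1 :: "nat \<Rightarrow> nat" where "cl1 v = (k + v - 1) mod N"
definition tt1 :: "nat \<Rightarrow> nat" where "tt1 v = (v - 1) div N"
definition rho1 :: "nat \<Rightarrow> nat" where "rho1 c = (c + (N - k)) mod N + 1"
definition cl2 :: "nat \<Rightarrow> nat" where "cl2 v = (k + (N - v mod N)) mod N"
definition tt2 :: "nat \<Rightarrow> nat" where "tt2 v = v div N"
definition rho2 :: "nat \<Rightarrow> nat" where "rho2 c = (k + (N - c)) mod N"
definition jj :: "nat \<Rightarrow> nat" where "jj c = k + (c + (N - k)) mod N"

lemma cs1: "clsys N {v. 0 < v} cl1 tt1 rho1"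
proof
  fix v :: nat assume "v \<in> {v. 0 < v}"
  then have v: "0 < v" by simp
  show "cl1 v < N \<and> rho1 (cl1 v) + N * tt1 v = v"
  proof
    show "cl1 v < N" unfolding cl1_def using Npos by simp
    have "(k + v - 1) + (N - k) = (v - 1) + N" using v kN by simp
    then have "rho1 (cl1 v) = (v - 1) mod N + 1"
      unfolding rho1_def cl1_def by (simp add: mod_add_left_eq)
    then show "rho1 (cl1 v) + N * tt1 v = v" unfolding tt1_def using v
      by (metis Suc_pred' add.commute add_Suc_right div_mult_mod_eq mult.commute plus_1_eq_Suc)
  qed
next
  fix c t assume c: "c < N"
  have m: "(c + (N - k)) mod N < N" using Npos by simp
  show "rho1 c + N * t \<in> {v. 0 < v} \<and> cl1 (rho1 c + N * t) = c \<and> tt1 (rho1 c + N * t) = t"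
  proof (intro conjI)
    show "rho1 c + N * t \<in> {v. 0 < v}" unfolding rho1_def by simp
    have "k + (rho1 c + N * t) - 1 = k + (c + (N - k)) mod N + N * t" unfolding rho1_def by simp
    then have "cl1 (rho1 c + N * t) = (k + (c + (N - k)) + N * t) mod N"
      unfolding cl1_def by (simp add: mod_add_left_eq mod_add_right_eq)
    also have "k + (c + (N - k)) + N * t = c + N * (Suc t)" using kN by simp
    also have "(c + N * (Suc t)) mod N = c mod N" by (rule mod_mult_self2)
    finally show "cl1 (rho1 c + N * t) = c" using c by simp
    show "tt1 (rho1 c + N * t) = t" unfolding tt1_def rho1_def using m Npos by simp
  qed
qed

lemma cs2: "clsys N UNIV cl2 tt2 rho2"
proof
  fix v :: nat
  show "cl2 v < N \<and> rho2 (cl2 v) + N * tt2 v = v"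
  proof
    show "cl2 v < N" unfolding cl2_def using Npos by simp
    have "rho2 (cl2 v) = v mod N" unfolding rho2_def cl2_def
      by (rule mod_invol[OF Npos]) (use Npos in simp)
    then show "rho2 (cl2 v) + N * tt2 v = v" unfolding tt2_def by simp
  qed
next
  fix c t assume c: "c < N"
  have m: "rho2 c < N" unfolding rho2_def using Npos by simp
  have md: "(rho2 c + N * t) mod N = rho2 c" using m by simp
  show "rho2 c + N * t \<in> UNIV \<and> cl2 (rho2 c + N * t) = c \<and> tt2 (rho2 c + N * t) = t"
  proof (intro conjI)
    show "rho2 c + N * t \<in> UNIV" by simp
    show "cl2 (rho2 c + N * t) = c" unfolding cl2_def md unfolding rho2_def
      by (rule mod_invol[OF Npos c])
    show "tt2 (rho2 c + N * t) = t" unfolding tt2_def using m by simp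
  qed
qed

sublocale c1: clsys N "{v. 0 < v}" cl1 tt1 rho1 by (rule cs1)
sublocale c2: clsys N UNIV cl2 tt2 rho2 by (rule cs2)
sublocale rs N s k r by unfold_locales (rule rpos)

lemma jj_props:
  assumes c: "c < N"
  shows "k \<le> jj c" "jj c \<le> N + k - 1" "jj c mod N = c" "rho1 c = jj c - k + 1"
    "int k + int (rho1 c) = int (jj c) + 1"
    "c = k \<Longrightarrow> jj c = k \<and> rho2 c = 0"
    "c \<noteq> k \<Longrightarrow> k < jj c \<and> rho2 c = N + k - jj c"
proof -
  note f1 = mod_form1[OF c kN] and f2 = mod_form2[OF c kN]
  show "k \<le> jj c" unfolding jj_def by simp
  show "jj c \<le> N + k - 1" unfolding jj_def using f1 c kN by auto
  show "jj c mod N = c" unfolding jj_def using f1 c kN by (auto simp: mod_add_self2)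
  show "rho1 c = jj c - k + 1" unfolding jj_def rho1_def by simp
  show "int k + int (rho1 c) = int (jj c) + 1" unfolding jj_def rho1_def by simp
  show "c = k \<Longrightarrow> jj c = k \<and> rho2 c = 0" unfolding jj_def rho2_def using f1 f2 by simp
  show "c \<noteq> k \<Longrightarrow> k < jj c \<and> rho2 c = N + k - jj c" unfolding jj_def rho2_def using f1 f2 c kN by auto
qed

lemma s_mod_eq: "x mod int N = y mod int N \<Longrightarrow> s x = s y"
  using s_mod[OF sper, of x] s_mod[OF sper, of y] by simp

lemma gl_class: "0 < v \<Longrightarrow> gl v = gl (rho1 (cl1 v))"
proof -
  assume v: "0 < v"
  have "v = rho1 (cl1 v) + N * tt1 v" using c1.H1[of v] v by simp
  then have "int k + int v = (int k + int (rho1 (cl1 v))) + int N * int (tt1 v)" by (metis of_nat_add of_nat_mult add.assoc)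
  then show ?thesis using s_period[OF sper, of "int k + int (rho1 (cl1 v))" "int (tt1 v)"] by (simp add: ac_simps)
qed

lemma gm_class: "gm v = gm (rho2 (cl2 v))"
proof -
  have "v = rho2 (cl2 v) + N * tt2 v" using c2.H1[of v] by simp
  then have "int v = int (rho2 (cl2 v)) + int N * int (tt2 v)" by (metis of_nat_add of_nat_mult)
  then have e: "int k - int v = (int k - int (rho2 (cl2 v))) + int N * (- int (tt2 v))"
    by (simp add: algebra_simps)
  have "s (int k - int v) = s (int k - int (rho2 (cl2 v)))" unfolding e by (rule s_period[OF sper])
  then show ?thesis by simp
qed

lemma gl_rho: "c < N \<Longrightarrow> gl (rho1 c + N * t) = gl (rho1 c)"
  using gl_class[of "rho1 c + N * t"] c1.H2[of c t] by simp

lemma gm_rho: "c < N \<Longrightarrow> gm (rho2 c + N * t) = gm (rho2 c)"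
  using gm_class[of "rho2 c + N * t"] c2.H2[of c t] by simp

end


lemma summ_affine: "sum_mset (image_mset (\<lambda>t. A + int t) W) = int (size W) * A + int (sum_mset W)"
  by (induction W) (simp_all add: algebra_simps)

context mainloc
begin

definition szs1 :: "nat multiset \<Rightarrow> nat \<Rightarrow> nat" where
  "szs1 Lm = (\<lambda>c. if c < N then size (filter_mset (\<lambda>v. cl1 v = c) Lm) else 0)"
definition szs2 :: "nat multiset \<Rightarrow> nat \<Rightarrow> nat" where
  "szs2 M = (\<lambda>c. if c < N then size (filter_mset (\<lambda>v. cl2 v = c) M) else 0)"
definition PairsAB :: "(nat \<Rightarrow> nat) \<Rightarrow> (nat \<Rightarrow> nat) \<Rightarrow> (nat multiset \<times> nat multiset) set" where
  "PairsAB a b = {P \<in> Pairs s k r. szs1 (fst P) = a \<and> szs2 (snd P) = b}"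
definition Dom :: "((nat \<Rightarrow> nat) \<times> (nat \<Rightarrow> nat)) set" where
  "Dom = {(a, b). (\<forall>i\<ge>N. a i = 0) \<and> (\<forall>i\<ge>N. b i = 0) \<and> int (\<Sum>i<N. a i) = int (\<Sum>i<N. b i) - int r}"
definition f1 :: "nat \<Rightarrow> bool" where "f1 c = (\<not> gl (rho1 c))"
definition f2 :: "nat \<Rightarrow> bool" where "f2 c = (\<not> gm (rho2 c))"
definition Box :: "(nat \<Rightarrow> nat) \<Rightarrow> (nat \<Rightarrow> nat) \<Rightarrow> ((nat \<Rightarrow> nat multiset) \<times> (nat \<Rightarrow> nat multiset)) set" where
  "Box a b = PiE {..<N} (\<lambda>c. Mf (f1 c) (a c)) \<times> PiE {..<N} (\<lambda>c. Mf (f2 c) (b c))"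
definition Psi :: "nat multiset \<times> nat multiset \<Rightarrow> (nat \<Rightarrow> nat multiset) \<times> (nat \<Rightarrow> nat multiset)" where
  "Psi P = (c1.splt (fst P), c2.splt (snd P))"
definition Psi' :: "(nat \<Rightarrow> nat multiset) \<times> (nat \<Rightarrow> nat multiset) \<Rightarrow> nat multiset \<times> nat multiset" where
  "Psi' W = (c1.jn (fst W), c2.jn (snd W))"
definition TT :: "(nat \<Rightarrow> nat multiset) \<times> (nat \<Rightarrow> nat multiset) \<Rightarrow> nat" where
  "TT W = (\<Sum>c<N. sum_mset (fst W c)) + (\<Sum>c<N. sum_mset (snd W c))"
definition lin :: "(nat \<Rightarrow> nat) \<Rightarrow> (nat \<Rightarrow> nat) \<Rightarrow> nat \<Rightarrow> int" where
  "lin a b i = (\<Sum>c<N. int (a c) * upexp N (int k) (rho1 c) i + int (b c) * downexp N (int k) (rho2 c) i)"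

lemma pos_of_Pairs: "(Lm, M) \<in> Pairs s k r \<Longrightarrow> set_mset Lm \<subseteq> {v. 0 < v}"
proof -
  assume "(Lm, M) \<in> Pairs s k r"
  then have n0: "0 \<notin># Lm" unfolding Pairs_def by simp
  show ?thesis
  proof
    fix x assume "x \<in># Lm"
    have "x \<noteq> 0"
    proof
      assume "x = 0"
      with \<open>x \<in># Lm\<close> n0 show False by simp
    qed
    then show "x \<in> {v. 0 < v}" by simp
  qed
qed

lemma size_total1: "set_mset Lm \<subseteq> {v. 0 < v} \<Longrightarrow> (\<Sum>c<N. size (filter_mset (\<lambda>v. cl1 v = c) Lm)) = size Lm"
proof -
  assume L: "set_mset Lm \<subseteq> {v. 0 < v}"
  have "(\<Sum>c<N. filter_mset (\<lambda>v. cl1 v = c) Lm) = Lm"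
    by (rule sum_filter_partition) (use L c1.H1 in auto)
  then show ?thesis by (metis size_multiset_sum)
qed

lemma size_total2: "(\<Sum>c<N. size (filter_mset (\<lambda>v. cl2 v = c) M)) = size M"
proof -
  have "(\<Sum>c<N. filter_mset (\<lambda>v. cl2 v = c) M) = M"
    by (rule sum_filter_partition) (use c2.H1 in auto)
  then show ?thesis by (metis size_multiset_sum)
qed

lemma size_jn1: "size (c1.jn W) = (\<Sum>c<N. size (W c))"
  unfolding c1.jn_def by simp

lemma size_jn2: "size (c2.jn W) = (\<Sum>c<N. size (W c))"
  unfolding c2.jn_def by simp

lemma PiE_UNIV: "W \<in> PiE {..<N} B \<Longrightarrow> W \<in> PiE {..<N} (\<lambda>_. UNIV)"
  by (auto simp: PiE_iff)

lemma bij_Psi: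
  assumes ab: "(a, b) \<in> Dom"
  shows "bij_betw Psi (PairsAB a b) (Box a b)"
proof (rule bij_betw_byWitness[where f'=Psi'])
  have a0: "\<forall>i\<ge>N. a i = 0" and b0: "\<forall>i\<ge>N. b i = 0"
    and sab: "int (\<Sum>i<N. a i) = int (\<Sum>i<N. b i) - int r" using ab unfolding Dom_def by auto
  show "\<forall>P\<in>PairsAB a b. Psi' (Psi P) = P"
  proof
    fix P assume "P \<in> PairsAB a b"
    then obtain Lm M where P: "P = (Lm, M)" "(Lm, M) \<in> Pairs s k r" unfolding PairsAB_def by (cases P) auto
    show "Psi' (Psi P) = P" unfolding P Psi_def Psi'_def
      using c1.jn_splt[OF pos_of_Pairs[OF P(2)]] c2.jn_splt[of M] by simp
  qed
  show "\<forall>W\<in>Box a b. Psi (Psi' W) = W"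
  proof
    fix W assume "W \<in> Box a b"
    then obtain W1 W2 where W: "W = (W1, W2)" "W1 \<in> PiE {..<N} (\<lambda>c. Mf (f1 c) (a c))"
      "W2 \<in> PiE {..<N} (\<lambda>c. Mf (f2 c) (b c))" unfolding Box_def by auto
    show "Psi (Psi' W) = W" unfolding W Psi_def Psi'_def
      using c1.splt_jn[OF PiE_UNIV[OF W(2)]] c2.splt_jn[OF PiE_UNIV[OF W(3)]] by simp
  qed
  show "Psi ` PairsAB a b \<subseteq> Box a b"
  proof (rule image_subsetI)
    fix P assume "P \<in> PairsAB a b"
    then obtain Lm M where P: "P = (Lm, M)" "(Lm, M) \<in> Pairs s k r" "szs1 Lm = a" "szs2 M = b"
      unfolding PairsAB_def by (cases P) auto
    have L: "set_mset Lm \<subseteq> {v. 0 < v}" by (rule pos_of_Pairs[OF P(2)])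
    have cl: "\<forall>v. \<not> gl v \<longrightarrow> count Lm v \<le> 1" and cm: "\<forall>v. \<not> gm v \<longrightarrow> count M v \<le> 1"
      using P(2) unfolding Pairs_def by auto
    have "c1.splt Lm \<in> PiE {..<N} (\<lambda>c. Mf (f1 c) (a c))"
      unfolding PiE_iff
    proof
      show "\<forall>c\<in>{..<N}. c1.splt Lm c \<in> Mf (f1 c) (a c)"
      proof
        fix c assume "c \<in> {..<N}"
        then have c: "c < N" by simp
        have sz: "size (c1.splt Lm c) = a c" using P(3) c c1.size_splt[OF c] unfolding szs1_def by auto
        have "\<forall>t. count (c1.splt Lm c) t \<le> 1" if "f1 c"
        proof
          fix t
          have "\<not> gl (rho1 c + N * t)" using that gl_rho[OF c] unfolding f1_def by simp
          then show "count (c1.splt Lm c) t \<le> 1" using cl c1.count_splt[OF L c] by simp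
        qed
        then show "c1.splt Lm c \<in> Mf (f1 c) (a c)" unfolding Mf_def using sz by simp
      qed
      show "c1.splt Lm \<in> extensional {..<N}" unfolding c1.splt_def by simp
    qed
    moreover have "c2.splt M \<in> PiE {..<N} (\<lambda>c. Mf (f2 c) (b c))"
      unfolding PiE_iff
    proof
      show "\<forall>c\<in>{..<N}. c2.splt M c \<in> Mf (f2 c) (b c)"
      proof
        fix c assume "c \<in> {..<N}"
        then have c: "c < N" by simp
        have sz: "size (c2.splt M c) = b c" using P(4) c c2.size_splt[OF c] unfolding szs2_def by auto
        have "\<forall>t. count (c2.splt M c) t \<le> 1" if "f2 c"
        proof
          fix t
          have "\<not> gm (rho2 c + N * t)" using that gm_rho[OF c] unfolding f2_def by simp
          then show "count (c2.splt M c) t \<le> 1" using cm c2.count_splt[of M, OF _ c] by simp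
        qed
        then show "c2.splt M c \<in> Mf (f2 c) (b c)" unfolding Mf_def using sz by simp
      qed
      show "c2.splt M \<in> extensional {..<N}" unfolding c2.splt_def by simp
    qed
    ultimately show "Psi P \<in> Box a b" unfolding Box_def Psi_def P by simp
  qed
  show "Psi' ` Box a b \<subseteq> PairsAB a b"
  proof (rule image_subsetI)
    fix W assume "W \<in> Box a b"
    then obtain W1 W2 where W: "W = (W1, W2)" "W1 \<in> PiE {..<N} (\<lambda>c. Mf (f1 c) (a c))"
      "W2 \<in> PiE {..<N} (\<lambda>c. Mf (f2 c) (b c))" unfolding Box_def by auto
    have W1c: "W1 c \<in> Mf (f1 c) (a c)" if "c < N" for c using W(2) that by (auto simp: PiE_iff)
    have W2c: "W2 c \<in> Mf (f2 c) (b c)" if "c < N" for c using W(3) that by (auto simp: PiE_iff)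
    define Lm where "Lm = c1.jn W1"
    define M where "M = c2.jn W2"
    have L: "set_mset Lm \<subseteq> {v. 0 < v}" unfolding Lm_def by (rule c1.set_jn)
    have spL: "c1.splt Lm = W1" unfolding Lm_def by (rule c1.splt_jn[OF PiE_UNIV[OF W(2)]])
    have spM: "c2.splt M = W2" unfolding M_def by (rule c2.splt_jn[OF PiE_UNIV[OF W(3)]])
    have szL: "size Lm = (\<Sum>c<N. a c)" unfolding Lm_def size_jn1
      by (rule sum.cong) (use W1c in \<open>auto simp: Mf_def\<close>)
    have szM: "size M = (\<Sum>c<N. b c)" unfolding M_def size_jn2
      by (rule sum.cong) (use W2c in \<open>auto simp: Mf_def\<close>)
    have "0 \<notin># Lm" using L by auto
    moreover have "size M = size Lm + r"
    proof -
      have "(\<Sum>i<N. b i) = (\<Sum>i<N. a i) + r" using sab by linarith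
      then show ?thesis using szL szM by simp
    qed
    moreover have "\<forall>v. \<not> gl v \<longrightarrow> count Lm v \<le> 1"
    proof (intro allI impI)
      fix v assume g: "\<not> gl v"
      show "count Lm v \<le> 1"
      proof (cases "v \<in># Lm")
        case False then show ?thesis by (simp add: not_in_iff)
      next
        case True
        then have v: "0 < v" using L by auto
        define c where "c = cl1 v"
        have c: "c < N" and ve: "v = rho1 c + N * tt1 v" using c1.H1[of v] v unfolding c_def by auto
        have "f1 c" unfolding f1_def using g gl_class[OF v] c_def by simp
        then have "count (W1 c) (tt1 v) \<le> 1" using W1c[OF c] unfolding Mf_def by simp
        moreover have "count (c1.splt Lm c) (tt1 v) = count Lm v" using c1.count_splt[OF L c] ve by simp
        ultimately show ?thesis using spL by simp
      qed
    qed
    moreover have "\<forall>v. \<not> gm v \<longrightarrow> count M v \<le> 1"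
    proof (intro allI impI)
      fix v assume g: "\<not> gm v"
      define c where "c = cl2 v"
      have c: "c < N" and ve: "v = rho2 c + N * tt2 v" using c2.H1[of v] unfolding c_def by auto
      have "f2 c" unfolding f2_def using g gm_class c_def by simp
      then have "count (W2 c) (tt2 v) \<le> 1" using W2c[OF c] unfolding Mf_def by simp
      moreover have "count (c2.splt M c) (tt2 v) = count M v" using c2.count_splt[of M, OF _ c] ve by simp
      ultimately show "count M v \<le> 1" using spM by simp
    qed
    ultimately have inP: "(Lm, M) \<in> Pairs s k r" unfolding Pairs_def by simp
    have s1: "szs1 Lm = a"
    proof
      fix c show "szs1 Lm c = a c"
      proof (cases "c < N")
        case True
        have "size (filter_mset (\<lambda>v. cl1 v = c) Lm) = size (W1 c)"
          unfolding Lm_def c1.filter_jn[OF True] by simp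
        then show ?thesis using W1c[OF True] True unfolding szs1_def Mf_def by simp
      next
        case False then show ?thesis using a0 unfolding szs1_def by simp
      qed
    qed
    have s2: "szs2 M = b"
    proof
      fix c show "szs2 M c = b c"
      proof (cases "c < N")
        case True
        have "size (filter_mset (\<lambda>v. cl2 v = c) M) = size (W2 c)"
          unfolding M_def c2.filter_jn[OF True] by simp
        then show ?thesis using W2c[OF True] True unfolding szs2_def Mf_def by simp
      next
        case False then show ?thesis using b0 unfolding szs2_def by simp
      qed
    qed
    show "Psi' W \<in> PairsAB a b" unfolding PairsAB_def Psi'_def W
      using inP s1 s2 Lm_def M_def by simp
  qed
qed

lemma wt_split:
  assumes P: "(Lm, M) \<in> Pairs s k r" and i: "i < N"
  shows "wtP N k (Lm, M) i = lin (szs1 Lm) (szs2 M) i + int (TT (Psi (Lm, M)))"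
proof -
  have L: "set_mset Lm \<subseteq> {v. 0 < v}" by (rule pos_of_Pairs[OF P])
  have A: "sum_mset (image_mset (\<lambda>v. upexp N (int k) v i) Lm) =
      (\<Sum>c<N. int (szs1 Lm c) * upexp N (int k) (rho1 c) i + int (sum_mset (c1.splt Lm c)))"
  proof -
    have "sum_mset (image_mset (\<lambda>v. upexp N (int k) v i) Lm) =
        (\<Sum>c<N. sum_mset (image_mset (\<lambda>t. upexp N (int k) (rho1 c + N * t) i) (c1.splt Lm c)))"
      by (rule c1.sum_splt[OF L])
    also have "\<dots> = (\<Sum>c<N. sum_mset (image_mset (\<lambda>t. upexp N (int k) (rho1 c) i + int t) (c1.splt Lm c)))"
      by (simp add: upexp_steps[OF Npos i])
    also have "\<dots> = (\<Sum>c<N. int (szs1 Lm c) * upexp N (int k) (rho1 c) i + int (sum_mset (c1.splt Lm c)))"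
    proof (rule sum.cong[OF refl])
      fix c assume "c \<in> {..<N}"
      then have c: "c < N" by simp
      show "sum_mset (image_mset (\<lambda>t. upexp N (int k) (rho1 c) i + int t) (c1.splt Lm c)) =
          int (szs1 Lm c) * upexp N (int k) (rho1 c) i + int (sum_mset (c1.splt Lm c))"
        unfolding summ_affine using c1.size_splt[OF c] c unfolding szs1_def by simp
    qed
    finally show ?thesis .
  qed
  have B: "sum_mset (image_mset (\<lambda>v. downexp N (int k) v i) M) =
      (\<Sum>c<N. int (szs2 M c) * downexp N (int k) (rho2 c) i + int (sum_mset (c2.splt M c)))"
  proof -
    have "sum_mset (image_mset (\<lambda>v. downexp N (int k) v i) M) =
        (\<Sum>c<N. sum_mset (image_mset (\<lambda>t. downexp N (int k) (rho2 c + N * t) i) (c2.splt M c)))"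
      by (rule c2.sum_splt) simp
    also have "\<dots> = (\<Sum>c<N. sum_mset (image_mset (\<lambda>t. downexp N (int k) (rho2 c) i + int t) (c2.splt M c)))"
      by (simp add: downexp_steps[OF Npos i])
    also have "\<dots> = (\<Sum>c<N. int (szs2 M c) * downexp N (int k) (rho2 c) i + int (sum_mset (c2.splt M c)))"
    proof (rule sum.cong[OF refl])
      fix c assume "c \<in> {..<N}"
      then have c: "c < N" by simp
      show "sum_mset (image_mset (\<lambda>t. downexp N (int k) (rho2 c) i + int t) (c2.splt M c)) =
          int (szs2 M c) * downexp N (int k) (rho2 c) i + int (sum_mset (c2.splt M c))"
        unfolding summ_affine using c2.size_splt[OF c] c unfolding szs2_def by simp
    qed
    finally show ?thesis .
  qed
  show ?thesis
    unfolding wtP_def prod.case A B lin_def TT_def Psi_def fst_conv snd_conv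
    by (simp add: sum.distrib)
qed

lemma wt_high: "i \<ge> N \<Longrightarrow> wtP N k P i = 0"
  unfolding wtP_def using upexp_high[OF Npos] downexp_high[OF Npos] by (cases P) simp

end


lemma bij_restrict:
  assumes "bij_betw f A B" "\<And>x. x \<in> A \<Longrightarrow> Q x \<longleftrightarrow> R (f x)"
  shows "bij_betw f {x\<in>A. Q x} {y\<in>B. R y}"
proof -
  have "inj_on f {x\<in>A. Q x}" using assms(1) unfolding bij_betw_def by (auto intro: inj_on_subset)
  moreover have "f ` {x\<in>A. Q x} = {y\<in>B. R y}"
    using assms unfolding bij_betw_def by force
  ultimately show ?thesis unfolding bij_betw_def by simp
qed

lemma gf_Mf: "gf (Mf d c) sum_mset = fps_X ^ (if d then c * (c - 1) div 2 else 0) * inverse (qpoch c)"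
  by (cases d) (simp_all add: gf_Mf_bos gf_Mf_fer)

lemma inverse_prod_fps: "inverse (\<Prod>i\<in>I. f i :: real fps) = (\<Prod>i\<in>I. inverse (f i))"
proof (induction I rule: infinite_finite_induct)
  case (infinite A) then show ?case by simp
next
  case empty then show ?case by simp
next
  case (insert x F) then show ?case by (simp add: fps_inverse_mult)
qed

lemma gf_cong: "(\<And>x. x \<in> A \<Longrightarrow> w x = v x) \<Longrightarrow> gf A w = gf A v"
  unfolding gf_def by (rule arg_cong[where f=Abs_fps]) (auto intro!: arg_cong[where f=card] ext)

context mainloc
begin

definition Qn :: "(nat \<Rightarrow> nat) \<Rightarrow> (nat \<Rightarrow> nat) \<Rightarrow> nat" where
  "Qn a b = (\<Sum>c<N. (if f1 c then a c * (a c - 1) div 2 else 0) + (if f2 c then b c * (b c - 1) div 2 else 0))"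

lemma gf_PiE_Mf:
  "gf (PiE {..<N} (\<lambda>c. Mf (f c) (a c))) (\<lambda>W. \<Sum>c<N. sum_mset (W c)) =
     fps_X ^ (\<Sum>c<N. if f c then a c * (a c - 1) div 2 else 0) * (\<Prod>c<N. inverse (qpoch (a c)))
   \<and> finfib (PiE {..<N} (\<lambda>c. Mf (f c) (a c))) (\<lambda>W. \<Sum>c<N. sum_mset (W c))"
proof -
  have G: "gf (PiE {..<N} (\<lambda>c. Mf (f c) (a c))) (\<lambda>W. \<Sum>c<N. sum_mset (W c)) =
      (\<Prod>c<N. gf (Mf (f c) (a c)) sum_mset) \<and> finfib (PiE {..<N} (\<lambda>c. Mf (f c) (a c))) (\<lambda>W. \<Sum>c<N. sum_mset (W c))"
    using gf_PiE[of "{..<N}" "\<lambda>c. Mf (f c) (a c)" "\<lambda>_. sum_mset"] finfib_Mf by simp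
  have "(\<Prod>c<N. gf (Mf (f c) (a c)) sum_mset) =
      (\<Prod>c<N. fps_X ^ (if f c then a c * (a c - 1) div 2 else 0) * inverse (qpoch (a c)))"
    by (simp add: gf_Mf)
  also have "\<dots> = fps_X ^ (\<Sum>c<N. if f c then a c * (a c - 1) div 2 else 0) * (\<Prod>c<N. inverse (qpoch (a c)))"
    by (simp add: prod.distrib power_sum)
  finally show ?thesis using G by simp
qed

lemma gf_Box:
  "gf (Box a b) TT = fps_X ^ Qn a b * inverse (\<Prod>c<N. qpoch (a c) * qpoch (b c))"
proof -
  note A = gf_PiE_Mf[of f1 a] and B = gf_PiE_Mf[of f2 b]
  have "gf (Box a b) TT = gf (Box a b) (\<lambda>(x, y). (\<lambda>W. \<Sum>c<N. sum_mset (W c)) x + (\<lambda>W. \<Sum>c<N. sum_mset (W c)) y)"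
    by (rule gf_cong) (auto simp: TT_def)
  also have "\<dots> = gf (PiE {..<N} (\<lambda>c. Mf (f1 c) (a c))) (\<lambda>W. \<Sum>c<N. sum_mset (W c)) *
      gf (PiE {..<N} (\<lambda>c. Mf (f2 c) (b c))) (\<lambda>W. \<Sum>c<N. sum_mset (W c))"
    unfolding Box_def using gf_times(1)[OF conjunct2[OF A] conjunct2[OF B]] by simp
  also have "\<dots> = fps_X ^ Qn a b * inverse (\<Prod>c<N. qpoch (a c) * qpoch (b c))"
    unfolding conjunct1[OF A] conjunct1[OF B] Qn_def inverse_prod_fps fps_inverse_mult prod.distrib
      sum.distrib power_add
    by (simp add: ac_simps)
  finally show ?thesis .
qed

lemma count_ab:
  assumes ab: "(a, b) \<in> Dom" and e: "\<forall>i\<ge>N. e i = 0"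
  shows "card {P \<in> PairsAB a b. wtP N k P = e} =
    (if \<exists>n. \<forall>i<N. e i = lin a b i + int n
     then fps_nth (gf (Box a b) TT) (THE n. \<forall>i<N. e i = lin a b i + int n) else 0)"
proof -
  have wt: "wtP N k P = e \<longleftrightarrow> (\<forall>i<N. e i = lin a b i + int (TT (Psi P)))" if P: "P \<in> PairsAB a b" for P
  proof -
    obtain Lm M where Pe: "P = (Lm, M)" "(Lm, M) \<in> Pairs s k r" "szs1 Lm = a" "szs2 M = b"
      using P unfolding PairsAB_def by (cases P) auto
    have "wtP N k P = e \<longleftrightarrow> (\<forall>i<N. wtP N k P i = e i)"
    proof
      assume "\<forall>i<N. wtP N k P i = e i"
      then show "wtP N k P = e" using e wt_high by (metis not_less ext)
    qed simp
    also have "\<dots> \<longleftrightarrow> (\<forall>i<N. e i = lin a b i + int (TT (Psi P)))"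
      using wt_split[OF Pe(2)] Pe by auto
    finally show ?thesis .
  qed
  show ?thesis
  proof (cases "\<exists>n. \<forall>i<N. e i = lin a b i + int n")
    case True
    then obtain n where n: "\<forall>i<N. e i = lin a b i + int n" by blast
    have uniq: "(\<forall>i<N. e i = lin a b i + int n') \<longleftrightarrow> n' = n" for n'
      using n Npos by auto
    have the: "(THE n. \<forall>i<N. e i = lin a b i + int n) = n" using uniq by simp
    have "bij_betw Psi {P \<in> PairsAB a b. wtP N k P = e} {W \<in> Box a b. TT W = n}"
      by (rule bij_restrict[OF bij_Psi[OF ab]]) (simp add: wt uniq)
    then have "card {P \<in> PairsAB a b. wtP N k P = e} = card {W \<in> Box a b. TT W = n}"
      by (rule bij_betw_same_card)
    then show ?thesis using True the by (simp add: gf_nth)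
  next
    case False
    have E: "{P \<in> PairsAB a b. wtP N k P = e} = {}" using False wt by blast
    show ?thesis unfolding E by (subst if_not_P[OF False]) simp
  qed
qed

end


lemma div4_lemma: "(y * 2) div 4 = y div (2::int)"
  by presburger

lemma int_tri: "int (x * (x - 1) div 2) = int x * (int x - 1) div 2"
proof (cases x)
  case 0 then show ?thesis by simp
next
  case (Suc y)
  then have e: "int (x * (x - 1)) = int x * (int x - 1)" by (simp add: of_nat_diff algebra_simps)
  have "int (x * (x - 1) div 2) = int (x * (x - 1)) div int 2" by (rule zdiv_int)
  then show ?thesis unfolding e by simp
qed

context mainloc
begin

lemma bij_jj: "bij_betw jj {..<N} {k..N + k - 1}"
proof (rule bij_betw_byWitness[where f'="\<lambda>j. j mod N"])
  show "\<forall>c\<in>{..<N}. jj c mod N = c" using jj_props(3) by simp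
  show "\<forall>j\<in>{k..N + k - 1}. jj (j mod N) = j"
  proof
    fix j assume j: "j \<in> {k..N + k - 1}"
    have "j + (N - k) = (j - k) + N" using j kN by auto
    then have "(j mod N + (N - k)) mod N = (j - k) mod N"
      by (simp add: mod_add_left_eq)
    also have "\<dots> = j - k" using j Npos by auto
    finally show "jj (j mod N) = j" unfolding jj_def using j by simp
  qed
  show "jj ` {..<N} \<subseteq> {k..N + k - 1}" using jj_props(1,2) by auto
  show "(\<lambda>j. j mod N) ` {k..N + k - 1} \<subseteq> {..<N}" using Npos by auto
qed

lemma sk_sq: "s x * s x = 1" using spm by (metis mult_1 mult_minus1 minus_minus)

lemma q_term:
  assumes "s y = s (int k) \<longleftrightarrow> \<not> f"
  shows "(int x * (int x - 1) * (1 - s (int k) * s y)) div 4 = int (if f then x * (x - 1) div 2 else 0)"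
proof (cases f)
  case False
  then have "s y = s (int k)" using assms by simp
  then show ?thesis using False sk_sq[of "int k"] by simp
next
  case True
  then have ne: "s y \<noteq> s (int k)" using assms by simp
  have "s (int k) * s y = -1" using spm ne by (metis mult_1 mult_minus1)
  then have "(int x * (int x - 1) * (1 - s (int k) * s y)) div 4 = (int x * (int x - 1) * 2) div 4" by simp
  also have "\<dots> = int x * (int x - 1) div 2" by (rule div4_lemma)
  finally show ?thesis using True int_tri by simp
qed

lemma s_jj1: "c < N \<Longrightarrow> s (int (jj c) + 1) = s (int k + int (rho1 c))"
  using jj_props(5) by simp

lemma s_jj2: "c < N \<Longrightarrow> s (int (jj c)) = s (int k - int (rho2 c))"
proof -
  assume c: "c < N"
  show ?thesis
  proof (cases "c = k")
    case True then show ?thesis using jj_props(6)[OF c] by simp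
  next
    case False
    then have "k < jj c" "rho2 c = N + k - jj c" using jj_props(7)[OF c] by auto
    moreover have "jj c \<le> N + k - 1" using jj_props(2)[OF c] .
    ultimately have "int k - int (rho2 c) = int (jj c) + int N * (-1)" by (simp add: of_nat_diff)
    then show ?thesis using s_period[OF sper, of "int (jj c)" "-1"] by simp
  qed
qed

lemma down_rho2: "c < N \<Longrightarrow> i < N \<Longrightarrow> downexp N (int k) (rho2 c) i = zr N (jj c) (N + k - 1) i - (if c = k then 1 else 0)"
proof -
  assume c: "c < N" and i: "i < N"
  show ?thesis
  proof (cases "c = k")
    case True
    then show ?thesis using jj_props(6)[OF c] zr_full[OF Npos i, of k] by (simp add: downexp_def)
  next
    case False
    then have "k < jj c" "rho2 c = N + k - jj c" using jj_props(7)[OF c] by auto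
    then show ?thesis using downexp_zr[of k "jj c" N i] jj_props(2)[OF c] False by simp
  qed
qed

lemma up_rho1: "c < N \<Longrightarrow> upexp N (int k) (rho1 c) i = zr N k (jj c) i"
  using jj_props(4)[of c] upexp_zr[of k "jj c" N i] jj_props(1)[of c] by simp

lemma rhs_mon_eq:
  assumes i: "i < N"
  shows "rhs_mon N s k a b i = lin a b i + int (Qn a b)"
proof -
  let ?G1 = "\<lambda>j. (int (a (j mod N)) * (int (a (j mod N)) - 1) * (1 - s (int k) * s (int j + 1))) div 4
           + (int (b (j mod N)) * (int (b (j mod N)) - 1) * (1 - s (int k) * s (int j))) div 4"
  let ?G2 = "\<lambda>j. int (a (j mod N)) * zr N k j i + int (b (j mod N)) * zr N j (N+k-1) i"
  have r: "rhs_mon N s k a b i = - int (b k) + sum ?G1 {k..N+k-1} + sum ?G2 {k..N+k-1}"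
    unfolding rhs_mon_def using i by simp
  have g1: "sum ?G1 {k..N+k-1} = (\<Sum>c<N. ?G1 (jj c))"
    by (rule sum.reindex_bij_betw[OF bij_jj, symmetric])
  have g2: "sum ?G2 {k..N+k-1} = (\<Sum>c<N. ?G2 (jj c))"
    by (rule sum.reindex_bij_betw[OF bij_jj, symmetric])
  have q: "(\<Sum>c<N. ?G1 (jj c)) = int (Qn a b)"
    unfolding Qn_def of_nat_sum
  proof (rule sum.cong[OF refl])
    fix c assume "c \<in> {..<N}"
    then have c: "c < N" by simp
    have m: "jj c mod N = c" by (rule jj_props(3)[OF c])
    have A: "(int (a c) * (int (a c) - 1) * (1 - s (int k) * s (int (jj c) + 1))) div 4 =
        int (if f1 c then a c * (a c - 1) div 2 else 0)"
      by (rule q_term) (simp add: s_jj1[OF c] f1_def)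
    have B: "(int (b c) * (int (b c) - 1) * (1 - s (int k) * s (int (jj c)))) div 4 =
        int (if f2 c then b c * (b c - 1) div 2 else 0)"
      by (rule q_term) (simp add: s_jj2[OF c] f2_def)
    show "?G1 (jj c) = int ((if f1 c then a c * (a c - 1) div 2 else 0) + (if f2 c then b c * (b c - 1) div 2 else 0))"
      unfolding m A B by simp
  qed
  have l: "(\<Sum>c<N. ?G2 (jj c)) = lin a b i + int (b k)"
  proof -
    have "(\<Sum>c<N. ?G2 (jj c)) = (\<Sum>c<N. (int (a c) * upexp N (int k) (rho1 c) i + int (b c) * downexp N (int k) (rho2 c) i)
        + (if c = k then int (b c) else 0))"
    proof (rule sum.cong[OF refl])
      fix c assume "c \<in> {..<N}"
      then have c: "c < N" by simp
      show "?G2 (jj c) = (int (a c) * upexp N (int k) (rho1 c) i + int (b c) * downexp N (int k) (rho2 c) i)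
        + (if c = k then int (b c) else 0)"
        unfolding jj_props(3)[OF c] up_rho1[OF c] down_rho2[OF c i] by (simp add: algebra_simps)
    qed
    also have "\<dots> = lin a b i + int (b k)"
      unfolding sum.distrib lin_def using kN by simp
    finally show ?thesis .
  qed
  show ?thesis unfolding r g1 g2 q l by simp
qed

end


lemma sum_fibers:
  assumes "finite A" "finite I" "\<And>x. x \<in> A \<Longrightarrow> g x \<in> I"
  shows "(\<Sum>i\<in>I. card {x\<in>A. g x = i}) = card A"
proof -
  have "A = (\<Union>i\<in>I. {x\<in>A. g x = i})" using assms(3) by auto
  moreover have "card (\<Union>i\<in>I. {x\<in>A. g x = i}) = (\<Sum>i\<in>I. card {x\<in>A. g x = i})"
    by (rule card_UN_disjoint) (use assms in auto)
  ultimately show ?thesis by simp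
qed

lemma size_le_sum: "(\<forall>x\<in>#X. 1 \<le> x) \<Longrightarrow> size X \<le> sum_mset (X :: nat multiset)"
  by (induction X) auto

context mainloc
begin

lemma sum_upexp: "(\<Sum>i<N. upexp N k' v i) = int v"
proof -
  have "(\<Sum>i<N. card {t. t < v \<and> (k' + int t) mod int N = int i}) = card {t. t < v}"
  proof -
    have eq: "{t. t < v \<and> (k' + int t) mod int N = int i} = {t\<in>{t. t < v}. nat ((k' + int t) mod int N) = i}" for i
    proof -
      have "(k' + int t) mod int N = int i \<longleftrightarrow> nat ((k' + int t) mod int N) = i" for t
        using Npos by (metis nat_int int_nat_eq pos_mod_sign of_nat_0_less_iff)
      then show ?thesis by auto
    qed
    show ?thesis unfolding eq
      by (rule sum_fibers) (use Npos in \<open>auto simp: nat_less_iff\<close>)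
  qed
  then show ?thesis unfolding upexp_def by (simp flip: of_nat_sum)
qed

lemma sum_downexp: "(\<Sum>i<N. downexp N k' v i) = int v"
proof -
  have "(\<Sum>i<N. card {t. 1 \<le> t \<and> t \<le> v \<and> (k' - int t) mod int N = int i}) = card {t. 1 \<le> t \<and> t \<le> v}"
  proof -
    have eq: "{t. 1 \<le> t \<and> t \<le> v \<and> (k' - int t) mod int N = int i} = {t\<in>{t. 1 \<le> t \<and> t \<le> v}. nat ((k' - int t) mod int N) = i}" for i
    proof -
      have "(k' - int t) mod int N = int i \<longleftrightarrow> nat ((k' - int t) mod int N) = i" for t
        using Npos by (metis nat_int int_nat_eq pos_mod_sign of_nat_0_less_iff)
      then show ?thesis by auto
    qed
    show ?thesis unfolding eq
      by (rule sum_fibers) (use Npos in \<open>auto simp: nat_less_iff\<close>)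
  qed
  moreover have "{t. 1 \<le> t \<and> t \<le> v} = {1..v}" by auto
  ultimately show ?thesis unfolding downexp_def by (simp flip: of_nat_sum)
qed

lemma sum_wtP: "(\<Sum>i<N. wtP N k (Lm, M) i) = int (sum_mset Lm) + int (sum_mset M)"
proof -
  have A: "(\<Sum>i<N. sum_mset (image_mset (\<lambda>v. upexp N (int k) v i) X)) = int (sum_mset X)" for X
    by (induction X) (simp_all add: sum.distrib sum_upexp)
  have B: "(\<Sum>i<N. sum_mset (image_mset (\<lambda>v. downexp N (int k) v i) X)) = int (sum_mset X)" for X
    by (induction X) (simp_all add: sum.distrib sum_downexp)
  show ?thesis unfolding wtP_def prod.case sum.distrib A B ..
qed

lemma fin_wt: "finite {P \<in> Pairs s k r. wtP N k P = e}"
proof -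
  define E where "E = nat (\<Sum>i<N. e i)"
  let ?U = "\<lambda>m. \<Union>n\<in>{..m}. multisets_of_size {..E} n"
  have "{P \<in> Pairs s k r. wtP N k P = e} \<subseteq> ?U E \<times> ?U (E + r)"
  proof
    fix P assume "P \<in> {P \<in> Pairs s k r. wtP N k P = e}"
    then obtain Lm M where P: "P = (Lm, M)" "(Lm, M) \<in> Pairs s k r" "wtP N k (Lm, M) = e" by (cases P) auto
    have s1: "(\<Sum>i<N. wtP N k (Lm, M) i) = int (sum_mset Lm) + int (sum_mset M)" by (rule sum_wtP)
    then have "(\<Sum>i<N. e i) = int (sum_mset Lm + sum_mset M)" unfolding P(3) by (simp only: of_nat_add)
    then have sE: "sum_mset Lm + sum_mset M = E" unfolding E_def by (simp only: nat_int)
    have L: "set_mset Lm \<subseteq> {v. 0 < v}" by (rule pos_of_Pairs[OF P(2)])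
    have szL: "size Lm \<le> sum_mset Lm" by (rule size_le_sum) (use L in auto)
    have szM: "size M = size Lm + r" using P(2) unfolding Pairs_def by simp
    have eL: "set_mset Lm \<subseteq> {..E}" using sE mem_le_sum_mset[of _ Lm] by fastforce
    have eM: "set_mset M \<subseteq> {..E}" using sE mem_le_sum_mset[of _ M] by fastforce
    have "Lm \<in> ?U E" using eL szL sE by (auto simp: multisets_of_size_def intro!: bexI[of _ "size Lm"])
    moreover have "M \<in> ?U (E + r)" using eM szL sE szM by (auto simp: multisets_of_size_def intro!: bexI[of _ "size M"])
    ultimately show "P \<in> ?U E \<times> ?U (E + r)" using P(1) by simp
  qed
  moreover have "finite (?U E \<times> ?U (E + r))" by auto
  ultimately show ?thesis by (rule finite_subset)
qed

lemma rhs_coeff_eq: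
  assumes ab: "(a, b) \<in> Dom" and e: "\<forall>i\<ge>N. e i = 0"
  shows "rhs_coeff N s k a b e = real (card {P \<in> PairsAB a b. wtP N k P = e})"
proof -
  define F where "F = inverse (\<Prod>c<N. qpoch (a c) * qpoch (b c))"
  have rm: "\<forall>i<N. rhs_mon N s k a b i = lin a b i + int (Qn a b)" using rhs_mon_eq by simp
  have rc: "rhs_coeff N s k a b e = (if \<exists>n. \<forall>i<N. e i = lin a b i + int (Qn a b) + int n
      then fps_nth F (THE n. \<forall>i<N. e i = lin a b i + int (Qn a b) + int n) else 0)"
  proof -
    have cond: "(\<forall>i<N. e i = rhs_mon N s k a b i + int n) \<longleftrightarrow> (\<forall>i<N. e i = lin a b i + int (Qn a b) + int n)" for n
      using rm by simp
    show ?thesis unfolding rhs_coeff_def coeff_mon_p_def F_def cond ..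
  qed
  have ca: "real (card {P \<in> PairsAB a b. wtP N k P = e}) = (if \<exists>n. \<forall>i<N. e i = lin a b i + int n
     then fps_nth (fps_X ^ Qn a b * F) (THE n. \<forall>i<N. e i = lin a b i + int n) else 0)"
    using count_ab[OF ab e] unfolding gf_Box F_def by simp
  show ?thesis
  proof (cases "\<exists>n. \<forall>i<N. e i = lin a b i + int n")
    case True
    then obtain n where n: "\<forall>i<N. e i = lin a b i + int n" by blast
    have uniq: "(\<forall>i<N. e i = lin a b i + int n') \<longleftrightarrow> n' = n" for n' using n Npos by auto
    have the1: "(THE n. \<forall>i<N. e i = lin a b i + int n) = n" using uniq by simp
    have uniq2: "(\<forall>i<N. e i = lin a b i + int (Qn a b) + int n') \<longleftrightarrow> n = Qn a b + n'" for n'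
      using n Npos by auto
    show ?thesis
    proof (cases "Qn a b \<le> n")
      case True
      have ex: "\<exists>n'. \<forall>i<N. e i = lin a b i + int (Qn a b) + int n'"
      proof
        show "\<forall>i<N. e i = lin a b i + int (Qn a b) + int (n - Qn a b)" using n True by (simp add: of_nat_diff)
      qed
      have the2: "(THE n'. \<forall>i<N. e i = lin a b i + int (Qn a b) + int n') = n - Qn a b"
        using uniq2 True by auto
      show ?thesis unfolding rc ca the1 the2 using ex True n
        by (simp add: fps_X_power_mult_nth)
    next
      case False
      have nex: "\<not> (\<exists>n'. \<forall>i<N. e i = lin a b i + int (Qn a b) + int n')"
        using uniq2 False by auto
      have exn: "\<exists>n. \<forall>i<N. e i = lin a b i + int n" using n by blast
      show ?thesis unfolding rc ca the1 if_not_P[OF nex] if_P[OF exn] using False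
        by (simp add: fps_X_power_mult_nth)
    qed
  next
    case False
    have nex: "\<not> (\<exists>n'. \<forall>i<N. e i = lin a b i + int (Qn a b) + int n')"
    proof
      assume "\<exists>n'. \<forall>i<N. e i = lin a b i + int (Qn a b) + int n'"
      then obtain n' where "\<forall>i<N. e i = lin a b i + int (Qn a b) + int n'" by blast
      then have "\<forall>i<N. e i = lin a b i + int (Qn a b + n')" by simp
      then show False using False by blast
    qed
    show ?thesis unfolding rc ca if_not_P[OF nex] if_not_P[OF False] by simp
  qed
qed

end


context mainloc
begin

definition clsx :: "(nat \<Rightarrow> nat) \<times> nat list \<times> (nat \<Rightarrow> nat) \<Rightarrow> (nat \<Rightarrow> nat) \<times> (nat \<Rightarrow> nat)" where
  "clsx x = (szs1 (fst (phi x)), szs2 (snd (phi x)))"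

lemma fiber_card:
  "card {x \<in> Rset N s k r. wtR N k x = e \<and> clsx x = (a, b)} = card {P \<in> PairsAB a b. wtP N k P = e}"
proof -
  have "bij_betw phi {x \<in> Rset N s k r. wtR N k x = e \<and> clsx x = (a, b)}
      {P \<in> Pairs s k r. wtP N k P = e \<and> (szs1 (fst P), szs2 (snd P)) = (a, b)}"
    by (rule bij_restrict[OF phi_bij]) (simp add: wt_phi clsx_def)
  then have "card {x \<in> Rset N s k r. wtR N k x = e \<and> clsx x = (a, b)} =
      card {P \<in> Pairs s k r. wtP N k P = e \<and> (szs1 (fst P), szs2 (snd P)) = (a, b)}"
    by (rule bij_betw_same_card)
  also have "{P \<in> Pairs s k r. wtP N k P = e \<and> (szs1 (fst P), szs2 (snd P)) = (a, b)} = {P \<in> PairsAB a b. wtP N k P = e}"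
    unfolding PairsAB_def by auto
  finally show ?thesis .
qed

lemma clsx_Dom: "x \<in> Rset N s k r \<Longrightarrow> clsx x \<in> Dom"
proof -
  assume x: "x \<in> Rset N s k r"
  obtain Lm M where P: "phi x = (Lm, M)" by (cases "phi x") auto
  have inP: "(Lm, M) \<in> Pairs s k r" using phi_in[OF x] P by simp
  have L: "set_mset Lm \<subseteq> {v. 0 < v}" by (rule pos_of_Pairs[OF inP])
  have szM: "size M = size Lm + r" using inP unfolding Pairs_def by simp
  have s1: "(\<Sum>c<N. szs1 Lm c) = size Lm" unfolding szs1_def using size_total1[OF L] by simp
  have s2: "(\<Sum>c<N. szs2 M c) = size M" unfolding szs2_def using size_total2[of M] by simp
  have A: "\<forall>i\<ge>N. szs1 Lm i = 0" "\<forall>i\<ge>N. szs2 M i = 0" by (simp_all add: szs1_def szs2_def)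
  have B: "int (\<Sum>c<N. szs1 Lm c) = int (\<Sum>c<N. szs2 M c) - int r" unfolding s1 s2 szM by simp
  show ?thesis unfolding clsx_def P Dom_def fst_conv snd_conv mem_Collect_eq prod.case using A B by blast
qed

lemma main_e:
  assumes e: "\<forall>i\<ge>N. e i = 0"
  shows "\<exists>c :: real.
      ((\<lambda>x. if wtR N k x = e then 1 else 0) has_sum c) (Rset N s k r) \<and>
      ((\<lambda>(a, b). rhs_coeff N s k a b e) has_sum c)
        {(a, b). (\<forall>i\<ge>N. a i = 0) \<and> (\<forall>i\<ge>N. b i = 0) \<and>
                 int (\<Sum>i<N. a i) = int (\<Sum>i<N. b i) - int r}"
proof -
  define S where "S = {x \<in> Rset N s k r. wtR N k x = e}"
  have "phi ` S \<subseteq> {P \<in> Pairs s k r. wtP N k P = e}"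
    unfolding S_def using phi_in wt_phi by auto
  then have "finite (phi ` S)" using fin_wt[of e] by (rule finite_subset)
  moreover have "inj_on phi S" using phi_inj unfolding S_def by (rule inj_on_subset) auto
  ultimately have finS: "finite S" by (rule finite_imageD)
  have L: "((\<lambda>x. if wtR N k x = e then 1 else 0) has_sum real (card S)) (Rset N s k r)"
  proof -
    have "((\<lambda>x. 1::real) has_sum (\<Sum>x\<in>S. 1)) S" by (rule has_sum_finite[OF finS])
    then have "((\<lambda>x. 1::real) has_sum real (card S)) S" by simp
    moreover have "((\<lambda>x. if wtR N k x = e then 1 else 0) has_sum real (card S)) (Rset N s k r) \<longleftrightarrow>
        ((\<lambda>x. 1::real) has_sum real (card S)) S"
      by (rule has_sum_cong_neutral) (auto simp: S_def)
    ultimately show ?thesis by simp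
  qed
  define K where "K = clsx ` S"
  have finK: "finite K" unfolding K_def using finS by simp
  have KD: "K \<subseteq> Dom" unfolding K_def S_def using clsx_Dom by auto
  have DomEq: "{(a, b). (\<forall>i\<ge>N. a i = 0) \<and> (\<forall>i\<ge>N. b i = 0) \<and> int (\<Sum>i<N. a i) = int (\<Sum>i<N. b i) - int r} = Dom"
    unfolding Dom_def ..
  have val: "rhs_coeff N s k a b e = real (card {x \<in> S. clsx x = (a, b)})" if "(a, b) \<in> Dom" for a b
  proof -
    have "{x \<in> S. clsx x = (a, b)} = {x \<in> Rset N s k r. wtR N k x = e \<and> clsx x = (a, b)}"
      unfolding S_def by auto
    then show ?thesis using rhs_coeff_eq[OF that e] fiber_card by simp
  qed
  have R: "((\<lambda>(a, b). rhs_coeff N s k a b e) has_sum real (card S)) Dom"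
  proof -
    have "((\<lambda>(a, b). rhs_coeff N s k a b e) has_sum (\<Sum>ab\<in>K. (\<lambda>(a, b). rhs_coeff N s k a b e) ab)) K"
      by (rule has_sum_finite[OF finK])
    moreover have "(\<Sum>ab\<in>K. (\<lambda>(a, b). rhs_coeff N s k a b e) ab) = real (card S)"
    proof -
      have "(\<Sum>ab\<in>K. (\<lambda>(a, b). rhs_coeff N s k a b e) ab) = (\<Sum>ab\<in>K. real (card {x \<in> S. clsx x = ab}))"
        by (rule sum.cong[OF refl]) (use KD val in auto)
      also have "\<dots> = real (\<Sum>ab\<in>K. card {x \<in> S. clsx x = ab})" by simp
      also have "(\<Sum>ab\<in>K. card {x \<in> S. clsx x = ab}) = card S"
        by (rule sum_fibers[OF finS finK]) (simp add: K_def)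
      finally show ?thesis .
    qed
    ultimately have "((\<lambda>(a, b). rhs_coeff N s k a b e) has_sum real (card S)) K" by simp
    moreover have "((\<lambda>(a, b). rhs_coeff N s k a b e) has_sum real (card S)) Dom \<longleftrightarrow>
        ((\<lambda>(a, b). rhs_coeff N s k a b e) has_sum real (card S)) K"
    proof (rule has_sum_cong_neutral)
      fix ab assume ab: "ab \<in> Dom - K"
      obtain a b where abe: "ab = (a, b)" by (cases ab) auto
      have nK: "(a, b) \<notin> clsx ` S" using ab abe K_def by simp
      have "{x \<in> S. clsx x = (a, b)} = {}"
      proof (rule equals0I)
        fix x assume "x \<in> {x \<in> S. clsx x = (a, b)}"
        then have "x \<in> S" "clsx x = (a, b)" by auto
        then have "(a, b) \<in> clsx ` S" by (metis image_eqI)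
        then show False using nK by simp
      qed
      then have E: "card {x \<in> S. clsx x = (a, b)} = 0" by (simp only: card.empty)
      have "rhs_coeff N s k a b e = real (card {x \<in> S. clsx x = (a, b)})" using val[of a b] ab abe by blast
      then show "(\<lambda>(a, b). rhs_coeff N s k a b e) ab = 0" unfolding E abe by simp
    next
      fix ab assume "ab \<in> K - Dom" then show "(\<lambda>(a, b). rhs_coeff N s k a b e) ab = 0" using KD by auto
    qed simp
    ultimately show ?thesis by simp
  qed
  show ?thesis using L R unfolding DomEq by blast
qed

end

theorem lemma7p4:
  fixes N m n k r :: nat and s :: "int \<Rightarrow> int"
  assumes "m \<noteq> n" and "N = m + n" and "N \<ge> 3"
    and "\<forall>i. s i = 1 \<or> s i = -1"
    and "\<forall>i. s (i + int N) = s i"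
    and "card {i \<in> {1..int N}. s i = 1} = m"
    and "k < N" and "r > 0"
  shows "\<forall>e :: nat \<Rightarrow> int. (\<forall>i\<ge>N. e i = 0) \<longrightarrow>
           (\<exists>c :: real.
              ((\<lambda>x. if wtR N k x = e then 1 else 0) has_sum c) (Rset N s k r) \<and>
              ((\<lambda>(a, b). rhs_coeff N s k a b e) has_sum c)
                {(a, b). (\<forall>i\<ge>N. a i = 0) \<and> (\<forall>i\<ge>N. b i = 0) \<and>
                         int (\<Sum>i<N. a i) = int (\<Sum>i<N. b i) - int r})"
proof (intro allI impI)
  fix e :: "nat \<Rightarrow> int"
  assume e: "\<forall>i\<ge>N. e i = 0"
  interpret mainloc N s k r
    by unfold_locales (use assms in auto)
  show "\<exists>c :: real.
              ((\<lambda>x. if wtR N k x = e then 1 else 0) has_sum c) (Rset N s k r) \<and>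
              ((\<lambda>(a, b). rhs_coeff N s k a b e) has_sum c)
                {(a, b). (\<forall>i\<ge>N. a i = 0) \<and> (\<forall>i\<ge>N. b i = 0) \<and>
                         int (\<Sum>i<N. a i) = int (\<Sum>i<N. b i) - int r}"
    by (rule main_e[OF e])
qed


end
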